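(* Let $Q$ be a finite quiver, $A=\Bbbk Q/(\geq 2)$, $J$ the ideal of $A$ generated by the loops, $B=A/J$. For each vertex $i$ let $\tilde P_i=Be_i$, let $\tilde I_i$ be the indecomposable injective $B$-module at $i$, and let $S_i$ be the simple module at $i$; regard these as $A$-modules. Then: (1) If $i\neq j$ and $\{\tilde P_i,\tilde P_j\}$ is a brick set in $A$-mod, then $\mathrm{Ext}^1_A(\tilde P_i,\tilde P_j)=0$; and if $\tilde P_i\not\cong S_i$ then $\mathrm{Ext}^1_A(\tilde P_i,\tilde P_i)=0$. (2) If $i\neq j$ and $\{\tilde I_i,\tilde I_j\}$ is a brick set in $A$-mod, then $\mathrm{Ext}^1_A(\tilde I_i,\tilde I_j)=0$; and if $\tilde I_i\not\cong S_i$ then $\mathrm{Ext}^1_A(\tilde I_i,\tilde I_i)=0$. (3) If $i\neq j$ then $\mathrm{Ext}^1_A(\tilde P_i,S_j)=0$. (4) If $i\neq j$ then $\mathrm{Ext}^1_A(S_i,\tilde I_j)=0$.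
   Context: $\Bbbk$ is an algebraically closed field; $\Bbbk Q$ is the path algebra with $e_i\alpha=\delta_{i,t(\alpha)}\alpha$, $\alpha e_j=\delta_{j,s(\alpha)}\alpha$; $(\geq 2)$ is the ideal generated by paths of length $\geq 2$; modules are finite-dimensional left modules, and a $B$-module is regarded as an $A$-module via $A\to B=A/J$. The indecomposable injective $B$-module at $i$ is $\tilde I_i=\mathrm{Hom}_\Bbbk(e_iB,\Bbbk)$. A brick is a module $M$ with $\mathrm{End}(M)=\Bbbk$; a set $\{X_1,\dots,X_k\}$ of nonzero modules is a brick set if each is a brick and $\dim\mathrm{Hom}(X_a,X_b)=\delta_{ab}$. *)

theory Defs
  imports "HOL-Computational_Algebra.Polynomial" "Jordan_Normal_Form.Matrix"
begin

record quiver =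
  nv  :: nat
  na  :: nat
  src :: "nat \<Rightarrow> nat"
  tgt :: "nat \<Rightarrow> nat"

definition quiver_wf :: "quiver \<Rightarrow> bool" where
  "quiver_wf Q \<longleftrightarrow> (\<forall>a < na Q. src Q a < nv Q \<and> tgt Q a < nv Q)"

definition is_loop :: "quiver \<Rightarrow> nat \<Rightarrow> bool" where
  "is_loop Q a \<longleftrightarrow> src Q a = tgt Q a"

text \<open>Basis elements of A: trivial paths e_v and arrows.\<close>
datatype pbasis = Vtx nat | Arr nat

definition basisA :: "quiver \<Rightarrow> pbasis list" where
  "basisA Q = map Vtx [0..<nv Q] @ map Arr [0..<na Q]"

text \<open>Product of basis elements in A (None means the product is 0).
  Conventions: e_i a = [i = t(a)] a,  a e_j = [j = s(a)] a, paths of length 2 vanish.\<close>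
fun mulA :: "quiver \<Rightarrow> pbasis \<Rightarrow> pbasis \<Rightarrow> pbasis option" where
  "mulA Q (Vtx i) (Vtx j) = (if i = j then Some (Vtx i) else None)"
| "mulA Q (Vtx i) (Arr a) = (if i = tgt Q a then Some (Arr a) else None)"
| "mulA Q (Arr a) (Vtx j) = (if j = src Q a then Some (Arr a) else None)"
| "mulA Q (Arr a) (Arr b) = None"

text \<open>B = A/J, J generated by the loops: basis = vertices and non-loop arrows.
  mulB is the multiplication of B pulled back along A \<rightarrow> B (loops map to 0).\<close>
definition basisB :: "quiver \<Rightarrow> pbasis list" where
  "basisB Q = map Vtx [0..<nv Q] @ map Arr (filter (\<lambda>a. \<not> is_loop Q a) [0..<na Q])"

fun loop_elt :: "quiver \<Rightarrow> pbasis \<Rightarrow> bool" where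
  "loop_elt Q (Vtx i) = False"
| "loop_elt Q (Arr a) = is_loop Q a"

definition mulB :: "quiver \<Rightarrow> pbasis \<Rightarrow> pbasis \<Rightarrow> pbasis option" where
  "mulB Q b c = (if loop_elt Q b \<or> loop_elt Q c then None else mulA Q b c)"

text \<open>A module of dimension n over A is given by matrices (the action of each
  basis element of A) satisfying the multiplication table and unitality.\<close>
type_synonym 'k amod = "nat \<times> (pbasis \<Rightarrow> 'k mat)"

definition sum_mats :: "nat \<Rightarrow> 'k::field mat list \<Rightarrow> 'k mat" where
  "sum_mats n Ms = foldr (+) Ms (0\<^sub>m n n)"

definition is_Amod :: "quiver \<Rightarrow> 'k::field amod \<Rightarrow> bool" where
  "is_Amod Q M \<longleftrightarrow>
     (\<forall>b \<in> set (basisA Q). snd M b \<in> carrier_mat (fst M) (fst M)) \<and>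
     (\<forall>b \<in> set (basisA Q). \<forall>c \<in> set (basisA Q).
        snd M b * snd M c = (case mulA Q b c of None \<Rightarrow> 0\<^sub>m (fst M) (fst M) | Some d \<Rightarrow> snd M d)) \<and>
     sum_mats (fst M) (map (\<lambda>v. snd M (Vtx v)) [0..<nv Q]) = 1\<^sub>m (fst M)"

definition is_hom :: "quiver \<Rightarrow> 'k::field amod \<Rightarrow> 'k amod \<Rightarrow> 'k mat \<Rightarrow> bool" where
  "is_hom Q M N f \<longleftrightarrow> f \<in> carrier_mat (fst N) (fst M) \<and>
     (\<forall>b \<in> set (basisA Q). f * snd M b = snd N b * f)"

definition mod_iso :: "quiver \<Rightarrow> 'k::field amod \<Rightarrow> 'k amod \<Rightarrow> bool" where
  "mod_iso Q M N \<longleftrightarrow> (\<exists>f g. is_hom Q M N f \<and> is_hom Q N M g \<and>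
     g * f = 1\<^sub>m (fst M) \<and> f * g = 1\<^sub>m (fst N))"

definition is_brick :: "quiver \<Rightarrow> 'k::field amod \<Rightarrow> bool" where
  "is_brick Q M \<longleftrightarrow> fst M > 0 \<and> (\<forall>f. is_hom Q M M f \<longrightarrow> (\<exists>c. f = c \<cdot>\<^sub>m 1\<^sub>m (fst M)))"

definition brick_pair :: "quiver \<Rightarrow> 'k::field amod \<Rightarrow> 'k amod \<Rightarrow> bool" where
  "brick_pair Q X Y \<longleftrightarrow> is_brick Q X \<and> is_brick Q Y \<and>
     (\<forall>f. is_hom Q X Y f \<longrightarrow> f = 0\<^sub>m (fst Y) (fst X)) \<and>
     (\<forall>f. is_hom Q Y X f \<longrightarrow> f = 0\<^sub>m (fst X) (fst Y))"

definition short_exact :: "quiver \<Rightarrow> 'k::field amod \<Rightarrow> 'k amod \<Rightarrow> 'k amod \<Rightarrow> 'k mat \<Rightarrow> 'k mat \<Rightarrow> bool" where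
  "short_exact Q N E M f g \<longleftrightarrow> is_hom Q N E f \<and> is_hom Q E M g \<and>
     (\<forall>v \<in> carrier_vec (fst N). f *\<^sub>v v = 0\<^sub>v (fst E) \<longrightarrow> v = 0\<^sub>v (fst N)) \<and>
     (\<forall>w \<in> carrier_vec (fst M). \<exists>v \<in> carrier_vec (fst E). g *\<^sub>v v = w) \<and>
     g * f = 0\<^sub>m (fst M) (fst N) \<and>
     (\<forall>v \<in> carrier_vec (fst E). g *\<^sub>v v = 0\<^sub>v (fst M) \<longrightarrow> (\<exists>u \<in> carrier_vec (fst N). v = f *\<^sub>v u))"

text \<open>Ext^1_A(M,N) = 0 (Yoneda description): every extension of M by N in A-mod splits.\<close>
definition Ext1_zero :: "quiver \<Rightarrow> 'k::field amod \<Rightarrow> 'k amod \<Rightarrow> bool" where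
  "Ext1_zero Q M N \<longleftrightarrow>
     (\<forall>E f g. is_Amod Q E \<and> short_exact Q N E M f g \<longrightarrow>
        (\<exists>s. is_hom Q M E s \<and> g * s = 1\<^sub>m (fst M)))"

definition simple_mod :: "quiver \<Rightarrow> nat \<Rightarrow> 'k::field amod" where
  "simple_mod Q i = (1, \<lambda>b. case b of Vtx v \<Rightarrow> (if v = i then 1\<^sub>m 1 else 0\<^sub>m 1 1)
                                     | Arr a \<Rightarrow> 0\<^sub>m 1 1)"

definition Pbasis :: "quiver \<Rightarrow> nat \<Rightarrow> pbasis list" where
  "Pbasis Q i = filter (\<lambda>c. mulB Q c (Vtx i) = Some c) (basisB Q)"

text \<open>B e_i with the left multiplication action of A (through A \<rightarrow> B).\<close>
definition Ptil :: "quiver \<Rightarrow> nat \<Rightarrow> 'k::field amod" where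
  "Ptil Q i = (let L = Pbasis Q i; n = length L in
     (n, \<lambda>b. mat n n (\<lambda>(r, c). if mulB Q b (L ! c) = Some (L ! r) then 1 else 0)))"

definition Ibasis :: "quiver \<Rightarrow> nat \<Rightarrow> pbasis list" where
  "Ibasis Q i = filter (\<lambda>c. mulB Q (Vtx i) c = Some c) (basisB Q)"

text \<open>Hom_k(e_i B, k) in the dual basis, with (a f)(x) = f(x a).\<close>
definition Itil :: "quiver \<Rightarrow> nat \<Rightarrow> 'k::field amod" where
  "Itil Q i = (let R = Ibasis Q i; n = length R in
     (n, \<lambda>b. mat n n (\<lambda>(r, c). if mulB Q (R ! r) b = Some (R ! c) then 1 else 0)))"

end

theory Submission imports Defs begin

lemma filter_upt_eq: "i < n \<Longrightarrow> filter (\<lambda>v. v = i) [0..<n] = [i]"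
proof (induction n)
  case 0 then show ?case by simp
next
  case (Suc n)
  show ?case
  proof (cases "i < n")
    case True
    then have "filter (\<lambda>v. v = i) [0..<n] = [i]" using Suc by simp
    then show ?thesis using True by simp
  next
    case False
    then have "i = n" using Suc by simp
    moreover have "filter (\<lambda>v. v = n) [0..<n] = []" by (simp add: filter_empty_conv)
    ultimately show ?thesis by simp
  qed
qed

lemma Pbasis_eq:
  assumes "i < nv Q"
  shows "Pbasis Q i = Vtx i # map Arr (filter (\<lambda>a. \<not> is_loop Q a \<and> src Q a = i) [0..<na Q])"
proof -
  have 1: "filter (\<lambda>c. mulB Q c (Vtx i) = Some c) (map Vtx [0..<nv Q]) = [Vtx i]"
  proof -
    have "filter (\<lambda>c. mulB Q c (Vtx i) = Some c) (map Vtx [0..<nv Q])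
       = map Vtx (filter (\<lambda>v. v = i) [0..<nv Q])"
      by (simp add: filter_map comp_def mulB_def)
    then show ?thesis using filter_upt_eq[OF assms] by simp
  qed
  have 2: "filter (\<lambda>c. mulB Q c (Vtx i) = Some c) (map Arr (filter (\<lambda>a. \<not> is_loop Q a) [0..<na Q]))
     = map Arr (filter (\<lambda>a. \<not> is_loop Q a \<and> src Q a = i) [0..<na Q])"
  proof -
    have "(\<lambda>a. mulB Q (Arr a) (Vtx i) = Some (Arr a)) = (\<lambda>a. \<not> is_loop Q a \<and> src Q a = i)"
      by (auto simp: mulB_def)
    then show ?thesis by (simp add: filter_map comp_def filter_filter conj_commute)
  qed
  show ?thesis unfolding Pbasis_def basisB_def using 1 2 by simp
qed

lemma Ibasis_eq:
  assumes "i < nv Q"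
  shows "Ibasis Q i = Vtx i # map Arr (filter (\<lambda>a. \<not> is_loop Q a \<and> tgt Q a = i) [0..<na Q])"
proof -
  have 1: "filter (\<lambda>c. mulB Q (Vtx i) c = Some c) (map Vtx [0..<nv Q]) = [Vtx i]"
  proof -
    have "(\<lambda>v. mulB Q (Vtx i) (Vtx v) = Some (Vtx v)) = (\<lambda>v. v = i)"
      by (auto simp: mulB_def)
    then have "filter (\<lambda>c. mulB Q (Vtx i) c = Some c) (map Vtx [0..<nv Q])
       = map Vtx (filter (\<lambda>v. v = i) [0..<nv Q])"
      by (simp add: filter_map comp_def)
    then show ?thesis using filter_upt_eq[OF assms] by simp
  qed
  have 2: "filter (\<lambda>c. mulB Q (Vtx i) c = Some c) (map Arr (filter (\<lambda>a. \<not> is_loop Q a) [0..<na Q]))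
     = map Arr (filter (\<lambda>a. \<not> is_loop Q a \<and> tgt Q a = i) [0..<na Q])"
  proof -
    have "(\<lambda>a. mulB Q (Vtx i) (Arr a) = Some (Arr a)) = (\<lambda>a. \<not> is_loop Q a \<and> tgt Q a = i)"
      by (auto simp: mulB_def)
    then show ?thesis by (simp add: filter_map comp_def filter_filter conj_commute)
  qed
  show ?thesis unfolding Ibasis_def basisB_def using 1 2 by simp
qed

lemma zero_mat_mult_vec[simp]: "v \<in> carrier_vec m \<Longrightarrow> 0\<^sub>m n m *\<^sub>v v = (0\<^sub>v n :: 'a::semiring_0 vec)"
  by (intro eq_vecI) (auto simp: scalar_prod_def)

lemma mat_mult_zero_vec[simp]: "A \<in> carrier_mat n m \<Longrightarrow> A *\<^sub>v 0\<^sub>v m = (0\<^sub>v n :: 'a::semiring_0 vec)"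
  by (intro eq_vecI) auto

lemma mat_mult_unit_vec: "A \<in> carrier_mat n m \<Longrightarrow> k < m \<Longrightarrow> A *\<^sub>v unit_vec m k = col (A :: 'a::semiring_1 mat) k"
  by (intro eq_vecI) auto

lemma mat01_mult_vec:
  assumes "u \<in> carrier_vec n" "r < m"
  shows "(mat m n (\<lambda>(r,c). if P r c then 1 else 0) *\<^sub>v u) $ r = (\<Sum>c<n. if P r c then u $ c else (0::'a::semiring_1))"
proof -
  have "(mat m n (\<lambda>(r,c). if P r c then 1 else 0) *\<^sub>v u) $ r
      = (\<Sum>c\<in>{0..<n}. (if P r c then 1 else 0) * u $ c)"
    using assms by (simp add: scalar_prod_def)
  also have "\<dots> = (\<Sum>c<n. if P r c then u $ c else 0)"
    by (rule sum.cong) auto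
  finally show ?thesis .
qed

lemma sum_if_single:
  assumes "(k::nat) < n" "\<And>c. c < n \<Longrightarrow> P c \<longleftrightarrow> c = k"
  shows "(\<Sum>c<n. if P c then f c else (0::'a::comm_monoid_add)) = f k"
proof -
  have "(\<Sum>c<n. if P c then f c else 0) = (\<Sum>c<n. if c = k then f c else 0)"
    by (rule sum.cong) (use assms in auto)
  also have "\<dots> = f k" using assms(1) by (subst sum.delta) auto
  finally show ?thesis .
qed

lemma sum_if_none:
  assumes "\<And>c::nat. c < n \<Longrightarrow> \<not> P c"
  shows "(\<Sum>c<n. if P c then f c else (0::'a::comm_monoid_add)) = 0"
  by (rule sum.neutral) (use assms in auto)

lemma mulB_simps[simp]:
  "mulB Q (Vtx v) (Vtx w) = (if v = w then Some (Vtx v) else None)"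
  "mulB Q (Vtx v) (Arr a) = (if \<not> is_loop Q a \<and> v = tgt Q a then Some (Arr a) else None)"
  "mulB Q (Arr a) (Vtx w) = (if \<not> is_loop Q a \<and> w = src Q a then Some (Arr a) else None)"
  "mulB Q (Arr a) (Arr b) = None"
  by (auto simp: mulB_def)

lemma basisA_mem[simp]:
  "Vtx v \<in> set (basisA Q) \<longleftrightarrow> v < nv Q"
  "Arr a \<in> set (basisA Q) \<longleftrightarrow> a < na Q"
  by (auto simp: basisA_def)

lemma Amod_carrier:
  "is_Amod Q E \<Longrightarrow> b \<in> set (basisA Q) \<Longrightarrow> snd E b \<in> carrier_mat (fst E) (fst E)"
  by (auto simp: is_Amod_def)

lemma Amod_act:
  assumes E: "is_Amod Q E" and b: "b \<in> set (basisA Q)" and c: "c \<in> set (basisA Q)"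
    and x: "x \<in> carrier_vec (fst E)"
  shows "snd E b *\<^sub>v (snd E c *\<^sub>v x) =
    (case mulA Q b c of None \<Rightarrow> 0\<^sub>v (fst E) | Some d \<Rightarrow> snd E d *\<^sub>v x)"
proof -
  have "snd E b *\<^sub>v (snd E c *\<^sub>v x) = (snd E b * snd E c) *\<^sub>v x"
    using Amod_carrier[OF E b] Amod_carrier[OF E c] x by simp
  also have "snd E b * snd E c = (case mulA Q b c of None \<Rightarrow> 0\<^sub>m (fst E) (fst E) | Some d \<Rightarrow> snd E d)"
    using E b c by (auto simp: is_Amod_def)
  finally show ?thesis using x by (auto split: option.splits)
qed

lemma hom_act:
  assumes h: "is_hom Q M N h" and b: "b \<in> set (basisA Q)"
    and Mb: "snd M b \<in> carrier_mat (fst M) (fst M)" and Nb: "snd N b \<in> carrier_mat (fst N) (fst N)"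
    and u: "u \<in> carrier_vec (fst M)"
  shows "h *\<^sub>v (snd M b *\<^sub>v u) = snd N b *\<^sub>v (h *\<^sub>v u)"
proof -
  have hc: "h \<in> carrier_mat (fst N) (fst M)" and eq: "h * snd M b = snd N b * h"
    using h b by (auto simp: is_hom_def)
  have "h *\<^sub>v (snd M b *\<^sub>v u) = (h * snd M b) *\<^sub>v u" using hc Mb u by simp
  also have "\<dots> = (snd N b * h) *\<^sub>v u" using eq by simp
  also have "\<dots> = snd N b *\<^sub>v (h *\<^sub>v u)" using hc Nb u by simp
  finally show ?thesis .
qed

section \<open>Splitting criterion\<close>

lemma split_crit:
  fixes M E :: "'k::field amod"
  assumes gh: "is_hom Q E M g"
    and Mc: "\<And>b. b \<in> set (basisA Q) \<Longrightarrow> snd M b \<in> carrier_mat (fst M) (fst M)"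
    and Ec: "\<And>b. b \<in> set (basisA Q) \<Longrightarrow> snd E b \<in> carrier_mat (fst E) (fst E)"
    and wc: "\<And>c. c < fst M \<Longrightarrow> w c \<in> carrier_vec (fst E)"
    and wg: "\<And>c. c < fst M \<Longrightarrow> g *\<^sub>v w c = unit_vec (fst M) c"
    and act: "\<And>b c. b \<in> set (basisA Q) \<Longrightarrow> c < fst M \<Longrightarrow>
      (\<exists>r<fst M. col (snd M b) c = unit_vec (fst M) r \<and> snd E b *\<^sub>v w c = w r) \<or>
      (col (snd M b) c = 0\<^sub>v (fst M) \<and> snd E b *\<^sub>v w c = 0\<^sub>v (fst E))"
  shows "\<exists>s. is_hom Q M E s \<and> g * s = 1\<^sub>m (fst M)"
proof -
  define s where "s = mat (fst E) (fst M) (\<lambda>(p,q). w q $ p)"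
  have sc: "s \<in> carrier_mat (fst E) (fst M)" unfolding s_def by simp
  have cols: "col s q = w q" if "q < fst M" for q
    unfolding s_def using that wc[OF that] by (intro eq_vecI) auto
  have gc: "g \<in> carrier_mat (fst M) (fst E)" using gh by (simp add: is_hom_def)
  have hom: "s * snd M b = snd E b * s" if b: "b \<in> set (basisA Q)" for b
  proof (rule mat_col_eqI)
    fix q assume "q < dim_col (snd E b * s)"
    then have q: "q < fst M" using sc by simp
    have l: "col (s * snd M b) q = s *\<^sub>v col (snd M b) q" using sc Mc[OF b] q by simp
    have r: "col (snd E b * s) q = snd E b *\<^sub>v w q" using sc Ec[OF b] q cols[OF q] by simp
    from act[OF b q] show "col (s * snd M b) q = col (snd E b * s) q"
    proof
      assume "\<exists>r<fst M. col (snd M b) q = unit_vec (fst M) r \<and> snd E b *\<^sub>v w q = w r"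
      then obtain r where r1: "r < fst M" "col (snd M b) q = unit_vec (fst M) r" "snd E b *\<^sub>v w q = w r"
        by blast
      have "s *\<^sub>v unit_vec (fst M) r = w r" using mat_mult_unit_vec[OF sc r1(1)] cols[OF r1(1)] by simp
      then show ?thesis using l r r1 by simp
    next
      assume "col (snd M b) q = 0\<^sub>v (fst M) \<and> snd E b *\<^sub>v w q = 0\<^sub>v (fst E)"
      then show ?thesis using l r sc by simp
    qed
  next
    show "dim_row (s * snd M b) = dim_row (snd E b * s)" using sc Ec[OF that] by simp
    show "dim_col (s * snd M b) = dim_col (snd E b * s)" using sc Mc[OF that] by simp
  qed
  have "g * s = 1\<^sub>m (fst M)"
  proof (rule mat_col_eqI)
    fix q assume "q < dim_col (1\<^sub>m (fst M) :: 'k mat)"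
    then have q: "q < fst M" by simp
    show "col (g * s) q = col (1\<^sub>m (fst M)) q" using gc sc q cols[OF q] wg[OF q] by simp
  qed (use gc sc in auto)
  moreover have "is_hom Q M E s" using sc hom by (simp add: is_hom_def)
  ultimately show ?thesis by blast
qed

lemma VA_nth_Vtx:
  "r < Suc (length as) \<Longrightarrow> (Vtx i # map Arr as) ! r = Vtx w \<longleftrightarrow> r = 0 \<and> w = i"
  by (cases r) auto

lemma VA_nth_Arr:
  assumes "distinct as" "k < Suc (length as)" "r < Suc (length as)" "(Vtx i # map Arr as) ! k = Arr a"
  shows "(Vtx i # map Arr as) ! r = Arr a \<longleftrightarrow> r = k"
proof -
  have d: "distinct (Vtx i # map Arr as)" using assms(1) by (auto simp: distinct_map inj_on_def)
  show ?thesis using nth_eq_iff_index_eq[OF d, of r k] assms by auto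
qed

lemma VA_arr_index:
  assumes "a \<in> set as"
  shows "\<exists>k. 0 < k \<and> k < Suc (length as) \<and> (Vtx i # map Arr as) ! k = Arr a"
proof -
  obtain r where "r < length as" "as ! r = a" using assms by (auto simp: in_set_conv_nth)
  then show ?thesis by (intro exI[of _ "Suc r"]) auto
qed

lemma VA_nth_cases:
  assumes "r < Suc (length as)"
  shows "r = 0 \<or> (\<exists>a\<in>set as. 0 < r \<and> (Vtx i # map Arr as) ! r = Arr a)"
proof (cases r)
  case (Suc r') then show ?thesis using assms by auto
qed simp

lemma vec01_unit:
  assumes "k < m" "\<And>r. r < m \<Longrightarrow> P r \<longleftrightarrow> r = k"
  shows "vec m (\<lambda>r. if P r then 1 else 0) = (unit_vec m k :: 'a::zero_neq_one vec)"
  using assms by (intro eq_vecI) auto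

lemma vec01_zero:
  assumes "\<And>r. r < m \<Longrightarrow> \<not> P r"
  shows "vec m (\<lambda>r. if P r then 1 else 0) = (0\<^sub>v m :: 'a::zero_neq_one vec)"
  using assms by (intro eq_vecI) auto

lemma inj_from_se:
  assumes se: "short_exact Q N E M f g" and a: "a \<in> carrier_vec (fst N)" and b: "b \<in> carrier_vec (fst N)"
    and eq: "f *\<^sub>v a = f *\<^sub>v b"
  shows "a = (b :: 'k::field vec)"
proof -
  have fc: "f \<in> carrier_mat (fst E) (fst N)" using se by (simp add: short_exact_def is_hom_def)
  have "f *\<^sub>v (a - b) = 0\<^sub>v (fst E)" using fc a b eq by (simp add: mult_minus_distrib_mat_vec)
  then have "a - b = 0\<^sub>v (fst N)" using se a b by (simp add: short_exact_def)
  then show ?thesis using a b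
  proof (intro eq_vecI)
    fix i assume h: "a - b = 0\<^sub>v (fst N)" and i: "i < dim_vec b"
    then have "(a - b) $ i = 0" using b by simp
    then show "a $ i = b $ i" using a b i by simp
  qed (use a b in auto)
qed


section \<open>P-type splitting\<close>

lemma P_lemma:
  fixes N :: "'k::field amod"
  assumes wf: "quiver_wf Q" and i: "i < nv Q"
    and Nc: "\<And>b. b \<in> set (basisA Q) \<Longrightarrow> snd N b \<in> carrier_mat (fst N) (fst N)"
    and HP: "\<And>u. u \<in> carrier_vec (fst N) \<Longrightarrow> snd N (Vtx i) *\<^sub>v u = u \<Longrightarrow>
               (\<forall>b<na Q. snd N (Arr b) *\<^sub>v u = 0\<^sub>v (fst N)) \<Longrightarrow> u = 0\<^sub>v (fst N)"
  shows "Ext1_zero Q (Ptil Q i :: 'k amod) N"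
  unfolding Ext1_zero_def
proof (intro allI impI, elim conjE)
  fix E f g assume E: "is_Amod Q (E :: 'k amod)" and se: "short_exact Q N E (Ptil Q i :: 'k amod) f g"
  define as where "as = filter (\<lambda>a. \<not> is_loop Q a \<and> src Q a = i) [0..<na Q]"
  define L where "L = Vtx i # map Arr as"
  define m where "m = Suc (length as)"
  define n where "n = fst E"
  have das: "distinct as" unfolding as_def by simp
  have setas: "a \<in> set as \<longleftrightarrow> a < na Q \<and> \<not> is_loop Q a \<and> src Q a = i" for a
    unfolding as_def by auto
  have PL: "Pbasis Q i = L" unfolding L_def as_def using Pbasis_eq[OF i] .
  have lenL: "length L = m" unfolding L_def m_def by simp
  define MM where "MM = (\<lambda>b. mat m m (\<lambda>(r,c). if mulB Q b (L!c) = Some (L!r) then 1 else (0::'k)))"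
  have Peq: "(Ptil Q i :: 'k amod) = (m, MM)"
    unfolding Ptil_def Let_def PL lenL MM_def by simp
  have Pfst: "fst (Ptil Q i :: 'k amod) = m" and Psnd: "snd (Ptil Q i :: 'k amod) = MM"
    using Peq by simp_all
  have MMc: "MM b \<in> carrier_mat m m" for b unfolding MM_def by simp
  have colMM: "c < m \<Longrightarrow> col (MM b) c = vec m (\<lambda>r. if mulB Q b (L!c) = Some (L!r) then 1 else 0)" for b c
    unfolding MM_def by simp
  have Lv: "r < m \<Longrightarrow> L ! r = Vtx w \<longleftrightarrow> r = 0 \<and> w = i" for r w
    unfolding L_def m_def by (rule VA_nth_Vtx)
  have La: "k < m \<Longrightarrow> r < m \<Longrightarrow> L ! k = Arr a \<Longrightarrow> L ! r = Arr a \<longleftrightarrow> r = k" for k r a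
    unfolding L_def m_def using VA_nth_Arr[OF das] by blast
  have Lv': "r < m \<Longrightarrow> Vtx w = L ! r \<longleftrightarrow> r = 0 \<and> w = i" for r w
    using Lv by metis
  have La': "k < m \<Longrightarrow> r < m \<Longrightarrow> L ! k = Arr a \<Longrightarrow> Arr a = L ! r \<longleftrightarrow> r = k" for k r a
    using La by metis
  have Lidx: "a \<in> set as \<Longrightarrow> \<exists>k. 0 < k \<and> k < m \<and> L ! k = Arr a" for a
    unfolding L_def m_def by (rule VA_arr_index)
  have Lcases: "r < m \<Longrightarrow> r = 0 \<or> (\<exists>a\<in>set as. 0 < r \<and> L ! r = Arr a)" for r
    unfolding L_def m_def by (rule VA_nth_cases)
  have L0: "L ! 0 = Vtx i" unfolding L_def by simp
  have m0: "0 < m" unfolding m_def by simp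
  have Lbasis: "L ! c \<in> set (basisA Q)" if c: "c < m" for c
    using Lcases[OF c]
  proof
    assume "c = 0" then show ?thesis using L0 i by simp
  next
    assume "\<exists>a\<in>set as. 0 < c \<and> L ! c = Arr a"
    then obtain a where "a \<in> set as" "L ! c = Arr a" by blast
    then show ?thesis using setas[of a] by simp
  qed
  have fh: "is_hom Q N E f" and gh: "is_hom Q E (Ptil Q i :: 'k amod) g"
    and gsurj: "\<forall>w \<in> carrier_vec m. \<exists>v \<in> carrier_vec n. g *\<^sub>v v = w"
    and ker: "\<forall>v \<in> carrier_vec n. g *\<^sub>v v = 0\<^sub>v m \<longrightarrow> (\<exists>u \<in> carrier_vec (fst N). v = f *\<^sub>v u)"
    using se unfolding short_exact_def n_def Pfst by auto
  have fc: "f \<in> carrier_mat n (fst N)" using fh unfolding is_hom_def n_def by simp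
  have gc: "g \<in> carrier_mat m n" using gh unfolding is_hom_def n_def Pfst by simp
  have Ec: "b \<in> set (basisA Q) \<Longrightarrow> snd E b \<in> carrier_mat n n" for b
    using Amod_carrier[OF E] n_def by simp
  have gact: "b \<in> set (basisA Q) \<Longrightarrow> x \<in> carrier_vec n \<Longrightarrow> g *\<^sub>v (snd E b *\<^sub>v x) = MM b *\<^sub>v (g *\<^sub>v x)" for b x
    using hom_act[OF gh, of b x] Ec MMc Pfst Psnd n_def by simp
  have fact: "b \<in> set (basisA Q) \<Longrightarrow> u \<in> carrier_vec (fst N) \<Longrightarrow> f *\<^sub>v (snd N b *\<^sub>v u) = snd E b *\<^sub>v (f *\<^sub>v u)" for b u
    using hom_act[OF fh, of b u] Ec Nc n_def by simp
  have Eact: "b \<in> set (basisA Q) \<Longrightarrow> c \<in> set (basisA Q) \<Longrightarrow> x \<in> carrier_vec n \<Longrightarrow>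
      snd E b *\<^sub>v (snd E c *\<^sub>v x) = (case mulA Q b c of None \<Rightarrow> 0\<^sub>v n | Some d \<Rightarrow> snd E d *\<^sub>v x)" for b c x
    unfolding n_def using Amod_act[OF E] by blast
  obtain v0 where v0: "v0 \<in> carrier_vec n" "g *\<^sub>v v0 = unit_vec m 0"
    using gsurj unit_vec_carrier by blast
  define v where "v = snd E (Vtx i) *\<^sub>v v0"
  have vc: "v \<in> carrier_vec n" unfolding v_def using Ec[of "Vtx i"] i v0 by simp
  have MMu0: "MM b *\<^sub>v unit_vec m 0 = col (MM b) 0" for b using mat_mult_unit_vec[OF MMc m0] .
  have gv: "g *\<^sub>v v = unit_vec m 0"
  proof -
    have "g *\<^sub>v v = MM (Vtx i) *\<^sub>v unit_vec m 0" unfolding v_def using gact[of "Vtx i" v0] i v0 by simp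
    also have "\<dots> = unit_vec m 0" unfolding MMu0 colMM[OF m0] L0
      by (rule vec01_unit[OF m0]) (use Lv Lv' in auto)
    finally show ?thesis .
  qed
  have vi: "snd E (Vtx i) *\<^sub>v v = v" unfolding v_def using Eact[of "Vtx i" "Vtx i" v0] i v0 by simp
  have key: "snd E (Arr l) *\<^sub>v v = 0\<^sub>v n" if l: "l < na Q" "is_loop Q l" "src Q l = i" for l
  proof -
    define x where "x = snd E (Arr l) *\<^sub>v v"
    have xc: "x \<in> carrier_vec n" unfolding x_def using Ec[of "Arr l"] l vc by simp
    have "g *\<^sub>v x = MM (Arr l) *\<^sub>v unit_vec m 0" unfolding x_def using gact[of "Arr l" v] l vc gv by simp
    also have "\<dots> = 0\<^sub>v m" unfolding MMu0 colMM[OF m0] L0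
      by (rule vec01_zero) (use l in auto)
    finally obtain u where u: "u \<in> carrier_vec (fst N)" "x = f *\<^sub>v u" using ker xc by blast
    have tl: "tgt Q l = i" using l by (simp add: is_loop_def)
    have "f *\<^sub>v (snd N (Vtx i) *\<^sub>v u) = f *\<^sub>v u"
      using fact[of "Vtx i" u] i u Eact[of "Vtx i" "Arr l" v] l vc tl unfolding x_def by simp
    then have u1: "snd N (Vtx i) *\<^sub>v u = u"
      using inj_from_se[OF se] Nc[of "Vtx i"] i u by simp
    have u2: "\<forall>b<na Q. snd N (Arr b) *\<^sub>v u = 0\<^sub>v (fst N)"
    proof (intro allI impI)
      fix b assume b: "b < na Q"
      have "f *\<^sub>v (snd N (Arr b) *\<^sub>v u) = f *\<^sub>v 0\<^sub>v (fst N)"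
        using fact[of "Arr b" u] b u Eact[of "Arr b" "Arr l" v] l vc fc unfolding x_def by simp
      then show "snd N (Arr b) *\<^sub>v u = 0\<^sub>v (fst N)"
        using inj_from_se[OF se] Nc[of "Arr b"] b u by simp
    qed
    have "u = 0\<^sub>v (fst N)" using HP[OF u(1) u1 u2] .
    then show ?thesis using u fc unfolding x_def by simp
  qed
  define w where "w = (\<lambda>c. snd E (L ! c) *\<^sub>v v)"
  have w0: "w 0 = v" unfolding w_def L0 using vi .
  have wc: "w c \<in> carrier_vec n" if c: "c < m" for c
    unfolding w_def using Ec[OF Lbasis[OF c]] vc by simp
  show "\<exists>s. is_hom Q (Ptil Q i :: 'k amod) E s \<and> g * s = 1\<^sub>m (fst (Ptil Q i :: 'k amod))"
  proof (rule split_crit[where w=w and M="Ptil Q i" and E=E and g=g and Q=Q])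
    show "is_hom Q E (Ptil Q i :: 'k amod) g" using gh .
    show "snd (Ptil Q i :: 'k amod) b \<in> carrier_mat (fst (Ptil Q i :: 'k amod)) (fst (Ptil Q i :: 'k amod))" for b
      unfolding Pfst Psnd using MMc .
    show "snd E b \<in> carrier_mat (fst E) (fst E)" if "b \<in> set (basisA Q)" for b
      using Ec[OF that] n_def by simp
    show "w c \<in> carrier_vec (fst E)" if "c < fst (Ptil Q i :: 'k amod)" for c using wc that Pfst n_def by simp
    show "g *\<^sub>v w c = unit_vec (fst (Ptil Q i :: 'k amod)) c" if c: "c < fst (Ptil Q i :: 'k amod)" for c
    proof -
      have c': "c < m" using c Pfst by simp
      have "g *\<^sub>v w c = MM (L ! c) *\<^sub>v unit_vec m 0" unfolding w_def using gact[OF Lbasis[OF c'] vc] gv by simp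
      also have "\<dots> = unit_vec m c" unfolding MMu0 colMM[OF m0] L0
      proof (rule vec01_unit[OF c'])
        fix r assume r: "r < m"
        show "(mulB Q (L ! c) (Vtx i) = Some (L ! r)) = (r = c)"
          using Lcases[OF c'] 
        proof
          assume "c = 0" then show ?thesis using Lv[OF r] Lv'[OF r] L0 by auto
        next
          assume "\<exists>a\<in>set as. 0 < c \<and> L ! c = Arr a"
          then obtain a where a: "a \<in> set as" "L ! c = Arr a" by blast
          then show ?thesis using setas[of a] La[OF c' r a(2)] La'[OF c' r a(2)] by auto
        qed
      qed
      finally show ?thesis using Pfst by simp
    qed
    show "(\<exists>r<fst (Ptil Q i :: 'k amod). col (snd (Ptil Q i :: 'k amod) b) c = unit_vec (fst (Ptil Q i :: 'k amod)) r \<and> snd E b *\<^sub>v w c = w r) \<or>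
          (col (snd (Ptil Q i :: 'k amod) b) c = 0\<^sub>v (fst (Ptil Q i :: 'k amod)) \<and> snd E b *\<^sub>v w c = 0\<^sub>v (fst E))"
      if b: "b \<in> set (basisA Q)" and c: "c < fst (Ptil Q i :: 'k amod)" for b c
    proof -
      have c': "c < m" using c Pfst by simp
      have goal: "(\<exists>r<m. col (MM b) c = unit_vec m r \<and> snd E b *\<^sub>v w c = w r) \<or>
          (col (MM b) c = 0\<^sub>v m \<and> snd E b *\<^sub>v w c = 0\<^sub>v n)"
      proof (cases b)
        case (Vtx u)
        then have u: "u < nv Q" using b by simp
        show ?thesis using Lcases[OF c']
        proof
          assume c0: "c = 0"
          show ?thesis
          proof (cases "u = i")
            case True
            have "col (MM b) c = unit_vec m 0" unfolding c0 colMM[OF m0] L0 Vtx True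
              by (rule vec01_unit[OF m0]) (use Lv Lv' in auto)
            moreover have "snd E b *\<^sub>v w c = w 0" unfolding c0 w0 Vtx True using vi .
            ultimately show ?thesis using m0 by blast
          next
            case False
            have "col (MM b) c = 0\<^sub>v m" unfolding c0 colMM[OF m0] L0 Vtx
              by (rule vec01_zero) (use False in auto)
            moreover have "snd E b *\<^sub>v w c = 0\<^sub>v n" unfolding c0 w0 Vtx v_def
              using Eact[of "Vtx u" "Vtx i" v0] u i v0 False by simp
            ultimately show ?thesis by blast
          qed
        next
          assume "\<exists>a\<in>set as. 0 < c \<and> L ! c = Arr a"
          then obtain a where a: "a \<in> set as" "L ! c = Arr a" by blast
          have a': "a < na Q" "\<not> is_loop Q a" "src Q a = i" using a setas by auto
          have ta: "tgt Q a < nv Q" using wf a' by (simp add: quiver_wf_def)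
          show ?thesis
          proof (cases "u = tgt Q a")
            case True
            have "col (MM b) c = unit_vec m c" unfolding colMM[OF c'] a(2) Vtx
              by (rule vec01_unit[OF c']) (use True a' La[OF c' _ a(2)] La'[OF c' _ a(2)] in auto)
            moreover have "snd E b *\<^sub>v w c = w c" unfolding w_def a(2) Vtx
              using Eact[of "Vtx u" "Arr a" v] True a' ta vc by simp
            ultimately show ?thesis using c' by blast
          next
            case False
            have "col (MM b) c = 0\<^sub>v m" unfolding colMM[OF c'] a(2) Vtx
              by (rule vec01_zero) (use False in auto)
            moreover have "snd E b *\<^sub>v w c = 0\<^sub>v n" unfolding w_def a(2) Vtx
              using Eact[of "Vtx u" "Arr a" v] False a' u vc by simp
            ultimately show ?thesis by blast
          qed
        qed
      next
        case (Arr a)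
        then have a: "a < na Q" using b by simp
        show ?thesis using Lcases[OF c']
        proof
          assume c0: "c = 0"
          show ?thesis
          proof (cases "a \<in> set as")
            case True
            then obtain k where k: "0 < k" "k < m" "L ! k = Arr a" using Lidx by blast
            have "col (MM b) c = unit_vec m k" unfolding c0 colMM[OF m0] L0 Arr
              by (rule vec01_unit[OF k(2)]) (use True setas La[OF k(2) _ k(3)] La'[OF k(2) _ k(3)] k(3) in auto)
            moreover have "snd E b *\<^sub>v w c = w k"
            proof -
              have "w k = snd E (Arr a) *\<^sub>v v" unfolding w_def k(3) ..
              then show ?thesis unfolding c0 w0 Arr by simp
            qed
            ultimately show ?thesis using k by blast
          next
            case False
            have "col (MM b) c = 0\<^sub>v m" unfolding c0 colMM[OF m0] L0 Arr
              by (rule vec01_zero) (use False setas a in auto)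
            moreover have "snd E b *\<^sub>v w c = 0\<^sub>v n"
            proof (cases "src Q a = i")
              case True
              then have "is_loop Q a" using False setas a by auto
              then show ?thesis unfolding c0 w0 Arr using key a True by simp
            next
              case False
              then show ?thesis unfolding c0 w0 Arr v_def
                using Eact[of "Arr a" "Vtx i" v0] a i v0 by simp
            qed
            ultimately show ?thesis by blast
          qed
        next
          assume "\<exists>a'\<in>set as. 0 < c \<and> L ! c = Arr a'"
          then obtain a' where a': "a' \<in> set as" "L ! c = Arr a'" by blast
          have "col (MM b) c = 0\<^sub>v m" unfolding colMM[OF c'] a'(2) Arr
            by (rule vec01_zero) simp
          moreover have "snd E b *\<^sub>v w c = 0\<^sub>v n" unfolding w_def a'(2) Arr
            using Eact[of "Arr a" "Arr a'" v] a a' setas vc by simp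
          ultimately show ?thesis by blast
        qed
      qed
      then show ?thesis unfolding Pfst Psnd n_def .
    qed
  qed
qed


lemma vec_minus_minus: "a \<in> carrier_vec n \<Longrightarrow> t \<in> carrier_vec n \<Longrightarrow> a - (a - t) = (t :: 'a::ab_group_add vec)"
  by (intro eq_vecI) auto

lemma vec_minus_zero_eq: "a \<in> carrier_vec n \<Longrightarrow> t \<in> carrier_vec n \<Longrightarrow> a - t = 0\<^sub>v n \<Longrightarrow> a = (t :: 'a::ab_group_add vec)"
proof (intro eq_vecI)
  fix i assume "a \<in> carrier_vec n" "t \<in> carrier_vec n" "a - t = 0\<^sub>v n" "i < dim_vec t"
  then have "(a - t) $ i = 0" by simp
  then show "a $ i = t $ i" using \<open>a \<in> carrier_vec n\<close> \<open>t \<in> carrier_vec n\<close> \<open>i < dim_vec t\<close> by simp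
qed auto

section \<open>I-type splitting\<close>

lemma I_lemma:
  fixes M :: "'k::field amod"
  assumes wf: "quiver_wf Q" and i: "i < nv Q" and j: "j < nv Q"
    and Rdef: "R = Vtx i # map Arr bs" and dbs: "distinct bs"
    and bsP: "\<And>a. a \<in> set bs \<Longrightarrow> a < na Q \<and> \<not> is_loop Q a \<and> tgt Q a = i"
    and Mfst: "fst M = length R"
    and Msnd: "\<And>b. b \<in> set (basisA Q) \<Longrightarrow> snd M b =
        mat (length R) (length R) (\<lambda>(r,c). if mulB Q (R!r) b = Some (R!c) then 1 else 0)"
    and HA: "\<And>a. a \<in> set bs \<Longrightarrow> src Q a \<noteq> j"
    and HB: "i \<noteq> j \<or> bs \<noteq> []"
  shows "Ext1_zero Q M (Itil Q j :: 'k amod)"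
  unfolding Ext1_zero_def
proof (intro allI impI, elim conjE)
  fix E f g assume E: "is_Amod Q (E :: 'k amod)" and se: "short_exact Q (Itil Q j :: 'k amod) E M f g"
  define m where "m = length R"
  define n where "n = fst E"
  define cs where "cs = filter (\<lambda>a. \<not> is_loop Q a \<and> tgt Q a = j) [0..<na Q]"
  define R' where "R' = Vtx j # map Arr cs"
  define n' where "n' = length R'"
  have dcs: "distinct cs" unfolding cs_def by simp
  have setcs: "a \<in> set cs \<longleftrightarrow> a < na Q \<and> \<not> is_loop Q a \<and> tgt Q a = j" for a
    unfolding cs_def by auto
  have IR: "Ibasis Q j = R'" unfolding R'_def cs_def using Ibasis_eq[OF j] .
  define NN where "NN = (\<lambda>b. mat n' n' (\<lambda>(r,c). if mulB Q (R'!r) b = Some (R'!c) then 1 else (0::'k)))"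
  have Neq: "(Itil Q j :: 'k amod) = (n', NN)"
    unfolding Itil_def Let_def IR n'_def NN_def by simp
  have Nfst: "fst (Itil Q j :: 'k amod) = n'" and Nsnd: "snd (Itil Q j :: 'k amod) = NN"
    using Neq by simp_all
  have NNc: "NN b \<in> carrier_mat n' n'" for b unfolding NN_def by simp
  define MI where "MI = (\<lambda>b. mat m m (\<lambda>(r,c). if mulB Q (R!r) b = Some (R!c) then 1 else (0::'k)))"
  have MIc: "MI b \<in> carrier_mat m m" for b unfolding MI_def by simp
  have Mfst': "fst M = m" using Mfst m_def by simp
  have Msnd': "b \<in> set (basisA Q) \<Longrightarrow> snd M b = MI b" for b using Msnd m_def MI_def by simp
  have colMI: "c < m \<Longrightarrow> col (MI b) c = vec m (\<lambda>r. if mulB Q (R!r) b = Some (R!c) then 1 else 0)" for b c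
    unfolding MI_def by simp
  have mR: "m = Suc (length bs)" unfolding m_def Rdef by simp
  have Rv: "r < m \<Longrightarrow> R ! r = Vtx w \<longleftrightarrow> r = 0 \<and> w = i" for r w
    unfolding Rdef mR by (rule VA_nth_Vtx)
  have Rv': "r < m \<Longrightarrow> Vtx w = R ! r \<longleftrightarrow> r = 0 \<and> w = i" for r w
    using Rv by metis
  have Ra: "k < m \<Longrightarrow> r < m \<Longrightarrow> R ! k = Arr a \<Longrightarrow> R ! r = Arr a \<longleftrightarrow> r = k" for k r a
    unfolding Rdef mR using VA_nth_Arr[OF dbs] by blast
  have Ra': "k < m \<Longrightarrow> r < m \<Longrightarrow> R ! k = Arr a \<Longrightarrow> Arr a = R ! r \<longleftrightarrow> r = k" for k r a
    using Ra by metis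
  have Rcases: "r < m \<Longrightarrow> r = 0 \<or> (\<exists>a\<in>set bs. 0 < r \<and> R ! r = Arr a)" for r
    unfolding Rdef mR by (rule VA_nth_cases)
  have R0: "R ! 0 = Vtx i" unfolding Rdef by simp
  have m0: "0 < m" unfolding mR by simp
  have nR': "n' = Suc (length cs)" unfolding n'_def R'_def by simp
  have R'v: "r < n' \<Longrightarrow> R' ! r = Vtx w \<longleftrightarrow> r = 0 \<and> w = j" for r w
    unfolding R'_def nR' by (rule VA_nth_Vtx)
  have R'v': "r < n' \<Longrightarrow> Vtx w = R' ! r \<longleftrightarrow> r = 0 \<and> w = j" for r w
    using R'v by metis
  have R'a: "k < n' \<Longrightarrow> r < n' \<Longrightarrow> R' ! k = Arr a \<Longrightarrow> R' ! r = Arr a \<longleftrightarrow> r = k" for k r a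
    unfolding R'_def nR' using VA_nth_Arr[OF dcs] by blast
  have R'a': "k < n' \<Longrightarrow> r < n' \<Longrightarrow> R' ! k = Arr a \<Longrightarrow> Arr a = R' ! r \<longleftrightarrow> r = k" for k r a
    using R'a by metis
  have R'idx: "a \<in> set cs \<Longrightarrow> \<exists>k. 0 < k \<and> k < n' \<and> R' ! k = Arr a" for a
    unfolding R'_def nR' by (rule VA_arr_index)
  have R'cases: "r < n' \<Longrightarrow> r = 0 \<or> (\<exists>a\<in>set cs. 0 < r \<and> R' ! r = Arr a)" for r
    unfolding R'_def nR' by (rule VA_nth_cases)
  have R'0: "R' ! 0 = Vtx j" unfolding R'_def by simp
  have n'0: "0 < n'" unfolding nR' by simp
  have fh: "is_hom Q (Itil Q j :: 'k amod) E f" and gh: "is_hom Q E M g"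
    and gsurj: "\<forall>w \<in> carrier_vec m. \<exists>v \<in> carrier_vec n. g *\<^sub>v v = w"
    and ker: "\<forall>v \<in> carrier_vec n. g *\<^sub>v v = 0\<^sub>v m \<longrightarrow> (\<exists>u \<in> carrier_vec n'. v = f *\<^sub>v u)"
    and gf: "g * f = 0\<^sub>m m n'"
    using se unfolding short_exact_def n_def Mfst' Nfst by auto
  have fc: "f \<in> carrier_mat n n'" using fh unfolding is_hom_def n_def Nfst by simp
  have gc: "g \<in> carrier_mat m n" using gh unfolding is_hom_def n_def Mfst' by simp
  have Ec: "b \<in> set (basisA Q) \<Longrightarrow> snd E b \<in> carrier_mat n n" for b
    using Amod_carrier[OF E] n_def by simp
  have gact: "b \<in> set (basisA Q) \<Longrightarrow> x \<in> carrier_vec n \<Longrightarrow> g *\<^sub>v (snd E b *\<^sub>v x) = MI b *\<^sub>v (g *\<^sub>v x)" for b x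
    using hom_act[OF gh, of b x] Ec MIc Mfst' Msnd' n_def by simp
  have fact: "b \<in> set (basisA Q) \<Longrightarrow> u \<in> carrier_vec n' \<Longrightarrow> f *\<^sub>v (NN b *\<^sub>v u) = snd E b *\<^sub>v (f *\<^sub>v u)" for b u
    using hom_act[OF fh, of b u] Ec NNc Nfst Nsnd n_def by simp
  have Eact: "b \<in> set (basisA Q) \<Longrightarrow> c \<in> set (basisA Q) \<Longrightarrow> x \<in> carrier_vec n \<Longrightarrow>
      snd E b *\<^sub>v (snd E c *\<^sub>v x) = (case mulA Q b c of None \<Rightarrow> 0\<^sub>v n | Some d \<Rightarrow> snd E d *\<^sub>v x)" for b c x
    unfolding n_def using Amod_act[OF E] by blast
  have finj: "a \<in> carrier_vec n' \<Longrightarrow> b \<in> carrier_vec n' \<Longrightarrow> f *\<^sub>v a = f *\<^sub>v b \<Longrightarrow> a = b" for a b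
    using inj_from_se[OF se] Nfst by simp
  have gf0: "u \<in> carrier_vec n' \<Longrightarrow> g *\<^sub>v (f *\<^sub>v u) = 0\<^sub>v m" for u
  proof -
    assume u: "u \<in> carrier_vec n'"
    have "g *\<^sub>v (f *\<^sub>v u) = (g * f) *\<^sub>v u" using gc fc u by simp
    then show ?thesis using gf u by simp
  qed
  have Ncoord: "(NN b *\<^sub>v u) $ r = (\<Sum>c<n'. if mulB Q (R'!r) b = Some (R'!c) then u $ c else 0)"
    if "u \<in> carrier_vec n'" "r < n'" for b u r
    unfolding NN_def using mat01_mult_vec[OF that] .
  have Narr0: "(NN (Arr a) *\<^sub>v u) $ 0 = u $ k" if u: "u \<in> carrier_vec n'" and k: "k < n'" "R' ! k = Arr a" "a \<in> set cs" for u k a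
  proof -
    have "(NN (Arr a) *\<^sub>v u) $ 0 = (\<Sum>c<n'. if mulB Q (R'!0) (Arr a) = Some (R'!c) then u $ c else 0)"
      using Ncoord[OF u n'0] .
    also have "\<dots> = u $ k"
      by (rule sum_if_single[OF k(1)]) (use R'0 setcs[of a] k(3) R'a'[OF k(1) _ k(2)] in auto)
    finally show ?thesis .
  qed
  have Nvtx: "(NN (Vtx w) *\<^sub>v u) $ r = (if mulB Q (R'!r) (Vtx w) = Some (R'!r) then u $ r else 0)"
    if u: "u \<in> carrier_vec n'" and r: "r < n'" for u r w
  proof -
    have d: "c < n' \<Longrightarrow> mulB Q (R'!r) (Vtx w) = Some (R'!c) \<longleftrightarrow> c = r \<and> mulB Q (R'!r) (Vtx w) = Some (R'!r)" for c
    proof -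
      assume c: "c < n'"
      have "mulB Q x (Vtx w) = Some y \<Longrightarrow> y = x" for x y by (cases x) (auto split: if_splits)
      moreover have "R'!c = R'!r \<Longrightarrow> c = r"
        using c r R'cases[OF c] R'cases[OF r] R'v[OF c] R'v[OF r] R'a[OF r c] by (cases "R'!r") auto
      ultimately show ?thesis by metis
    qed
    show ?thesis
    proof (cases "mulB Q (R'!r) (Vtx w) = Some (R'!r)")
      case True
      have "(\<Sum>c<n'. if mulB Q (R'!r) (Vtx w) = Some (R'!c) then u $ c else 0) = u $ r"
        by (rule sum_if_single[OF r]) (use d True in auto)
      then show ?thesis using Ncoord[OF u r] True by simp
    next
      case False
      have "(\<Sum>c<n'. if mulB Q (R'!r) (Vtx w) = Some (R'!c) then u $ c else 0) = 0"
        by (rule sum_if_none) (use d False in auto)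
      then show ?thesis using Ncoord[OF u r] False by simp
    qed
  qed
  have soc: "u = (u $ 0) \<cdot>\<^sub>v unit_vec n' 0"
    if u: "u \<in> carrier_vec n'" and kill: "\<And>b. b < na Q \<Longrightarrow> NN (Arr b) *\<^sub>v u = 0\<^sub>v n'" for u
  proof (rule eq_vecI)
    fix r assume "r < dim_vec ((u $ 0) \<cdot>\<^sub>v unit_vec n' 0)"
    then have r: "r < n'" by simp
    show "u $ r = ((u $ 0) \<cdot>\<^sub>v unit_vec n' 0) $ r"
      using R'cases[OF r]
    proof
      assume "r = 0" then show ?thesis using r by simp
    next
      assume "\<exists>a\<in>set cs. 0 < r \<and> R' ! r = Arr a"
      then obtain a where a: "a \<in> set cs" "0 < r" "R' ! r = Arr a" by blast
      have "u $ r = (NN (Arr a) *\<^sub>v u) $ 0" using Narr0[OF u r a(3) a(1)] by simp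
      also have "\<dots> = 0" using kill[of a] a(1) setcs n'0 by simp
      finally show ?thesis using r a(2) by simp
    qed
  qed (use u in simp)
  have Nvtx_soc: "NN (Vtx w) *\<^sub>v (c \<cdot>\<^sub>v unit_vec n' 0) = (if w = j then c \<cdot>\<^sub>v unit_vec n' 0 else 0\<^sub>v n')" for w c
  proof (rule eq_vecI)
    fix r assume "r < dim_vec (if w = j then c \<cdot>\<^sub>v unit_vec n' 0 else 0\<^sub>v n')"
    then have r: "r < n'" by (simp split: if_splits)
    show "(NN (Vtx w) *\<^sub>v (c \<cdot>\<^sub>v unit_vec n' 0)) $ r = (if w = j then c \<cdot>\<^sub>v unit_vec n' 0 else 0\<^sub>v n') $ r"
    proof -
      have e: "(NN (Vtx w) *\<^sub>v (c \<cdot>\<^sub>v unit_vec n' 0)) $ r =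
        (if mulB Q (R'!r) (Vtx w) = Some (R'!r) then (c \<cdot>\<^sub>v unit_vec n' 0) $ r else 0)"
        by (rule Nvtx) (use r in simp_all)
      show ?thesis unfolding e using R'cases[OF r] R'0 r by (auto simp: smult_vec_def)
    qed
  qed (use NNc[of "Vtx w"] in simp)
  have Kl: "\<exists>c. x = f *\<^sub>v (c \<cdot>\<^sub>v unit_vec n' 0)"
    if x: "x \<in> carrier_vec n" "g *\<^sub>v x = 0\<^sub>v m" "\<And>b. b < na Q \<Longrightarrow> snd E (Arr b) *\<^sub>v x = 0\<^sub>v n" for x
  proof -
    obtain u where u: "u \<in> carrier_vec n'" "x = f *\<^sub>v u" using ker x by blast
    have "NN (Arr b) *\<^sub>v u = 0\<^sub>v n'" if b: "b < na Q" for b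
    proof (rule finj)
      show "f *\<^sub>v (NN (Arr b) *\<^sub>v u) = f *\<^sub>v 0\<^sub>v n'" using fact[of "Arr b" u] b u x(3)[OF b] fc by simp
    qed (use NNc[of "Arr b"] u in auto)
    then have "u = (u $ 0) \<cdot>\<^sub>v unit_vec n' 0" using soc[OF u(1)] by blast
    then show ?thesis using u by metis
  qed
  have K2: "x = 0\<^sub>v n"
    if x: "x \<in> carrier_vec n" "g *\<^sub>v x = 0\<^sub>v m" "\<And>b. b < na Q \<Longrightarrow> snd E (Arr b) *\<^sub>v x = 0\<^sub>v n"
      and w: "w < nv Q" "w \<noteq> j" "snd E (Vtx w) *\<^sub>v x = x" for x w
  proof -
    obtain c where c: "x = f *\<^sub>v (c \<cdot>\<^sub>v unit_vec n' 0)" using Kl[OF x] by blast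
    have "x = f *\<^sub>v (NN (Vtx w) *\<^sub>v (c \<cdot>\<^sub>v unit_vec n' 0))"
      using fact[of "Vtx w" "c \<cdot>\<^sub>v unit_vec n' 0"] w c by simp
    also have "\<dots> = 0\<^sub>v n" unfolding Nvtx_soc using w(2) fc by simp
    finally show ?thesis .
  qed
  have GC: "\<exists>W. W \<in> carrier_vec n \<and> g *\<^sub>v W = g *\<^sub>v Y \<and> (\<forall>b<na Q. snd E (Arr b) *\<^sub>v W = T b)
              \<and> (\<forall>w<nv Q. snd E (Vtx w) *\<^sub>v W = (if w = v then W else 0\<^sub>v n))"
    if Y: "Y \<in> carrier_vec n" and v: "v < nv Q" "v \<noteq> j" and Yv: "snd E (Vtx v) *\<^sub>v Y = Y"
      and Tc: "\<And>b. b < na Q \<Longrightarrow> T b \<in> carrier_vec n"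
      and T0: "\<And>b. b < na Q \<Longrightarrow> src Q b \<noteq> v \<Longrightarrow> T b = 0\<^sub>v n"
      and Tt: "\<And>b. b < na Q \<Longrightarrow> snd E (Vtx (tgt Q b)) *\<^sub>v T b = T b"
      and Tg: "\<And>b. b < na Q \<Longrightarrow> g *\<^sub>v (snd E (Arr b) *\<^sub>v Y - T b) = 0\<^sub>v m"
      and Tk: "\<And>b b'. b < na Q \<Longrightarrow> b' < na Q \<Longrightarrow> snd E (Arr b') *\<^sub>v T b = 0\<^sub>v n"
    for Y v T
  proof -
    define pre where "pre = (\<lambda>x. SOME u. u \<in> carrier_vec n' \<and> x = f *\<^sub>v u)"
    define xb where "xb = (\<lambda>b. snd E (Arr b) *\<^sub>v Y - T b)"
    have EY: "b < na Q \<Longrightarrow> snd E (Arr b) *\<^sub>v Y \<in> carrier_vec n" for b using Ec[of "Arr b"] Y by simp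
    have xbc: "b < na Q \<Longrightarrow> xb b \<in> carrier_vec n" for b unfolding xb_def using EY Tc by simp
    have xbk: "snd E (Arr b') *\<^sub>v xb b = 0\<^sub>v n" if b: "b < na Q" "b' < na Q" for b b'
    proof -
      have "snd E (Arr b') *\<^sub>v xb b = snd E (Arr b') *\<^sub>v (snd E (Arr b) *\<^sub>v Y) - snd E (Arr b') *\<^sub>v T b"
        unfolding xb_def using mult_minus_distrib_mat_vec[OF Ec[of "Arr b'"] EY Tc] b by simp
      also have "\<dots> = 0\<^sub>v n - 0\<^sub>v n" using Eact[of "Arr b'" "Arr b" Y] Tk[OF b] b Y by simp
      finally show ?thesis by simp
    qed
    have xbt: "snd E (Vtx (tgt Q b)) *\<^sub>v xb b = xb b" if b: "b < na Q" for b
    proof -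
      have t: "tgt Q b < nv Q" using wf b by (simp add: quiver_wf_def)
      have "snd E (Vtx (tgt Q b)) *\<^sub>v xb b = snd E (Vtx (tgt Q b)) *\<^sub>v (snd E (Arr b) *\<^sub>v Y) - snd E (Vtx (tgt Q b)) *\<^sub>v T b"
        unfolding xb_def using mult_minus_distrib_mat_vec[OF Ec[of "Vtx (tgt Q b)"] EY Tc] b t by simp
      also have "\<dots> = xb b" unfolding xb_def using Eact[of "Vtx (tgt Q b)" "Arr b" Y] Tt[OF b] b Y t by simp
      finally show ?thesis .
    qed
    define coef where "coef = (\<lambda>b. (pre (xb b)) $ 0)"
    have coefeq: "xb b = f *\<^sub>v (coef b \<cdot>\<^sub>v unit_vec n' 0)" if b: "b < na Q" for b
    proof -
      obtain c where c: "xb b = f *\<^sub>v (c \<cdot>\<^sub>v unit_vec n' 0)"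
        using Kl[OF xbc[OF b]] Tg[OF b] xbk[OF b] unfolding xb_def by blast
      have ex: "\<exists>u. u \<in> carrier_vec n' \<and> xb b = f *\<^sub>v u" using c by (intro exI[of _ "c \<cdot>\<^sub>v unit_vec n' 0"]) simp
      have p: "pre (xb b) \<in> carrier_vec n' \<and> xb b = f *\<^sub>v pre (xb b)"
        unfolding pre_def using someI_ex[OF ex] .
      have "pre (xb b) = c \<cdot>\<^sub>v unit_vec n' 0" using finj[of "pre (xb b)" "c \<cdot>\<^sub>v unit_vec n' 0"] p c by simp
      then have "coef b = c" unfolding coef_def using n'0 by simp
      then show ?thesis using c by simp
    qed
    define nvec where "nvec = vec n' (\<lambda>r. case R'!r of Arr b \<Rightarrow> (if src Q b = v then coef b else 0) | Vtx _ \<Rightarrow> 0)"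
    have nc: "nvec \<in> carrier_vec n'" unfolding nvec_def by simp
    have Narr: "NN (Arr b) *\<^sub>v nvec = (if b \<in> set cs \<and> src Q b = v then coef b \<cdot>\<^sub>v unit_vec n' 0 else 0\<^sub>v n')"
      if b: "b < na Q" for b
    proof (rule eq_vecI)
      fix r assume "r < dim_vec (if b \<in> set cs \<and> src Q b = v then coef b \<cdot>\<^sub>v unit_vec n' 0 else 0\<^sub>v n')"
      then have r: "r < n'" by (simp split: if_splits)
      have e: "(NN (Arr b) *\<^sub>v nvec) $ r = (\<Sum>c<n'. if mulB Q (R'!r) (Arr b) = Some (R'!c) then nvec $ c else 0)"
        using Ncoord[OF nc r] .
      show "(NN (Arr b) *\<^sub>v nvec) $ r = (if b \<in> set cs \<and> src Q b = v then coef b \<cdot>\<^sub>v unit_vec n' 0 else 0\<^sub>v n') $ r"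
        using R'cases[OF r]
      proof
        assume r0: "r = 0"
        show ?thesis
        proof (cases "b \<in> set cs")
          case True
          then obtain k where k: "0 < k" "k < n'" "R' ! k = Arr b" using R'idx by blast
          have "(NN (Arr b) *\<^sub>v nvec) $ r = nvec $ k"
            unfolding e by (rule sum_if_single[OF k(2)]) (use r0 R'0 setcs[of b] True R'a'[OF k(2) _ k(3)] in auto)
          then show ?thesis using k r0 True n'0 unfolding nvec_def by (auto simp: smult_vec_def)
        next
          case False
          have "(NN (Arr b) *\<^sub>v nvec) $ r = 0"
            unfolding e by (rule sum_if_none) (use r0 R'0 setcs[of b] False b in auto)
          then show ?thesis using False r by simp
        qed
      next
        assume "\<exists>a\<in>set cs. 0 < r \<and> R' ! r = Arr a"
        then obtain a where a: "0 < r" "R' ! r = Arr a" by blast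
        have "(NN (Arr b) *\<^sub>v nvec) $ r = 0"
          unfolding e a(2) by (rule sum_if_none) simp
        then show ?thesis using a r by auto
      qed
    qed (use NNc[of "Arr b"] in simp)
    have Nv: "NN (Vtx w) *\<^sub>v nvec = (if w = v then nvec else 0\<^sub>v n')" for w
    proof (rule eq_vecI)
      fix r assume "r < dim_vec (if w = v then nvec else 0\<^sub>v n')"
      then have r: "r < n'" using nc by (simp split: if_splits)
      have e: "(NN (Vtx w) *\<^sub>v nvec) $ r = (if mulB Q (R'!r) (Vtx w) = Some (R'!r) then nvec $ r else 0)"
        using Nvtx[OF nc r] .
      show "(NN (Vtx w) *\<^sub>v nvec) $ r = (if w = v then nvec else 0\<^sub>v n') $ r"
        using R'cases[OF r]
      proof
        assume r0: "r = 0"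
        then show ?thesis unfolding e using R'0 r unfolding nvec_def by auto
      next
        assume "\<exists>a\<in>set cs. 0 < r \<and> R' ! r = Arr a"
        then obtain a where a: "a \<in> set cs" "0 < r" "R' ! r = Arr a" by blast
        show ?thesis unfolding e using a r setcs[of a] unfolding nvec_def by auto
      qed
    qed (use NNc[of "Vtx w"] nc in simp)
    define W where "W = Y - f *\<^sub>v nvec"
    have fn: "f *\<^sub>v nvec \<in> carrier_vec n" using fc nc by simp
    have Wc: "W \<in> carrier_vec n" unfolding W_def using Y fn by simp
    have gW: "g *\<^sub>v W = g *\<^sub>v Y"
      unfolding W_def using mult_minus_distrib_mat_vec[OF gc Y fn] gf0[OF nc] gc Y by simp
    have WA: "snd E (Arr b) *\<^sub>v W = T b" if b: "b < na Q" for b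
    proof -
      have "snd E (Arr b) *\<^sub>v W = snd E (Arr b) *\<^sub>v Y - snd E (Arr b) *\<^sub>v (f *\<^sub>v nvec)"
        unfolding W_def using mult_minus_distrib_mat_vec[OF Ec[of "Arr b"] Y fn] b by simp
      also have "snd E (Arr b) *\<^sub>v (f *\<^sub>v nvec) = f *\<^sub>v (NN (Arr b) *\<^sub>v nvec)"
        using fact[of "Arr b" nvec] b nc by simp
      finally have e: "snd E (Arr b) *\<^sub>v W = snd E (Arr b) *\<^sub>v Y - f *\<^sub>v (NN (Arr b) *\<^sub>v nvec)" .
      show ?thesis
      proof (cases "b \<in> set cs \<and> src Q b = v")
        case True
        then have "f *\<^sub>v (NN (Arr b) *\<^sub>v nvec) = xb b" using Narr[OF b] coefeq[OF b] by simp
        then show ?thesis unfolding e xb_def using vec_minus_minus[OF EY[OF b] Tc[OF b]] by simp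
      next
        case False
        then have "NN (Arr b) *\<^sub>v nvec = 0\<^sub>v n'" using Narr[OF b] by presburger
        then have e2: "snd E (Arr b) *\<^sub>v W = snd E (Arr b) *\<^sub>v Y" unfolding e using fc EY[OF b] by simp
        show ?thesis
        proof (cases "src Q b = v")
          case False
          have "snd E (Arr b) *\<^sub>v Y = 0\<^sub>v n"
            using Yv Eact[of "Arr b" "Vtx v" Y] b v Y False by (metis basisA_mem mulA.simps(3) option.simps(4))
          then show ?thesis using e2 T0[OF b False] by simp
        next
          case True
          have tj: "tgt Q b \<noteq> j" using False True v(2) setcs[of b] b by (auto simp: is_loop_def)
          have t: "tgt Q b < nv Q" using wf b by (simp add: quiver_wf_def)
          have "xb b = 0\<^sub>v n"
            by (rule K2[OF xbc[OF b] _ _ t tj xbt[OF b]]) (use Tg[OF b] xbk[OF b] xb_def in auto)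
          then have "snd E (Arr b) *\<^sub>v Y = T b"
            using vec_minus_zero_eq[OF EY[OF b] Tc[OF b]] unfolding xb_def by simp
          then show ?thesis using e2 by simp
        qed
      qed
    qed
    have WV: "snd E (Vtx w) *\<^sub>v W = (if w = v then W else 0\<^sub>v n)" if w: "w < nv Q" for w
    proof -
      have "snd E (Vtx w) *\<^sub>v W = snd E (Vtx w) *\<^sub>v Y - snd E (Vtx w) *\<^sub>v (f *\<^sub>v nvec)"
        unfolding W_def using mult_minus_distrib_mat_vec[OF Ec[of "Vtx w"] Y fn] w by simp
      also have "snd E (Vtx w) *\<^sub>v (f *\<^sub>v nvec) = f *\<^sub>v (NN (Vtx w) *\<^sub>v nvec)"
        using fact[of "Vtx w" nvec] w nc by simp
      also have "snd E (Vtx w) *\<^sub>v Y = (if w = v then Y else 0\<^sub>v n)"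
        using Eact[of "Vtx w" "Vtx v" Y] w v Y Yv by simp
      finally show ?thesis unfolding Nv W_def using fc Y by auto
    qed
    show ?thesis using Wc gW WA WV by blast
  qed
  have mB0: "mulB Q x b = Some (Vtx i) \<longleftrightarrow> x = Vtx i \<and> b = Vtx i" for x b
    by (cases x; cases b) (auto split: if_splits)
  have mBa: "mulB Q x b = Some (Arr a) \<longleftrightarrow> \<not> is_loop Q a \<and>
      ((x = Vtx (tgt Q a) \<and> b = Arr a) \<or> (x = Arr a \<and> b = Vtx (src Q a)))" for x b a
    by (cases x; cases b) (auto split: if_splits)
  have col0: "col (MI b) 0 = (if b = Vtx i then unit_vec m 0 else 0\<^sub>v m)" for b
  proof (cases "b = Vtx i")
    case True
    have "col (MI b) 0 = unit_vec m 0" unfolding colMI[OF m0] R0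
      by (rule vec01_unit[OF m0]) (use True mB0 Rv in auto)
    then show ?thesis using True by simp
  next
    case False
    have "col (MI b) 0 = 0\<^sub>v m" unfolding colMI[OF m0] R0
      by (rule vec01_zero) (use False mB0 in auto)
    then show ?thesis using False by simp
  qed
  have colc: "col (MI b) c = (if b = Arr a then unit_vec m 0 else if b = Vtx (src Q a) then unit_vec m c else 0\<^sub>v m)"
    if c: "0 < c" "c < m" "R ! c = Arr a" "a \<in> set bs" for b c a
  proof -
    have a: "\<not> is_loop Q a" "tgt Q a = i" using bsP[OF c(4)] by auto
    show ?thesis
    proof (cases "b = Arr a")
      case True
      have "col (MI b) c = unit_vec m 0" unfolding colMI[OF c(2)] c(3)
        by (rule vec01_unit[OF m0]) (use True mBa a Rv in auto)
      then show ?thesis using True by simp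
    next
      case F1: False
      show ?thesis
      proof (cases "b = Vtx (src Q a)")
        case True
        have "col (MI b) c = unit_vec m c" unfolding colMI[OF c(2)] c(3)
          by (rule vec01_unit[OF c(2)]) (use True mBa a Ra[OF c(2) _ c(3)] in auto)
        then show ?thesis using True by simp
      next
        case False
        have "col (MI b) c = 0\<^sub>v m" unfolding colMI[OF c(2)] c(3)
          by (rule vec01_zero) (use False F1 mBa in auto)
        then show ?thesis using False F1 by simp
      qed
    qed
  qed
  have MIu: "c < m \<Longrightarrow> MI b *\<^sub>v unit_vec m c = col (MI b) c" for b c using mat_mult_unit_vec[OF MIc] .
  define y where "y = (\<lambda>c. SOME v. v \<in> carrier_vec n \<and> g *\<^sub>v v = unit_vec m c)"
  have y: "y c \<in> carrier_vec n \<and> g *\<^sub>v y c = unit_vec m c" for c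
  proof -
    have "\<exists>v. v \<in> carrier_vec n \<and> g *\<^sub>v v = unit_vec m c" using gsurj unit_vec_carrier by blast
    then show ?thesis unfolding y_def by (rule someI_ex)
  qed
  have Evc: "w < nv Q \<Longrightarrow> x \<in> carrier_vec n \<Longrightarrow> snd E (Vtx w) *\<^sub>v x \<in> carrier_vec n" for w x
    using Ec[of "Vtx w"] by simp
  have Eac: "b < na Q \<Longrightarrow> x \<in> carrier_vec n \<Longrightarrow> snd E (Arr b) *\<^sub>v x \<in> carrier_vec n" for b x
    using Ec[of "Arr b"] by simp
  obtain w0 where w0c: "w0 \<in> carrier_vec n" and w0g: "g *\<^sub>v w0 = unit_vec m 0"
    and w0A: "\<And>b. b < na Q \<Longrightarrow> snd E (Arr b) *\<^sub>v w0 = 0\<^sub>v n"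
    and w0V: "\<And>w. w < nv Q \<Longrightarrow> snd E (Vtx w) *\<^sub>v w0 = (if w = i then w0 else 0\<^sub>v n)"
  proof (cases "bs = []")
    case True
    then have ij: "i \<noteq> j" using HB by simp
    define Y where "Y = snd E (Vtx i) *\<^sub>v y 0"
    have Yc: "Y \<in> carrier_vec n" unfolding Y_def using Evc i y by simp
    have gY: "g *\<^sub>v Y = unit_vec m 0"
      unfolding Y_def using gact[of "Vtx i" "y 0"] i y[of 0] MIu[OF m0] col0 by simp
    have "\<exists>W. W \<in> carrier_vec n \<and> g *\<^sub>v W = g *\<^sub>v Y \<and> (\<forall>b<na Q. snd E (Arr b) *\<^sub>v W = (\<lambda>_. 0\<^sub>v n) b)
              \<and> (\<forall>w<nv Q. snd E (Vtx w) *\<^sub>v W = (if w = i then W else 0\<^sub>v n))"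
    proof (rule GC[OF Yc i ij])
      show "snd E (Vtx i) *\<^sub>v Y = Y" unfolding Y_def using Eact[of "Vtx i" "Vtx i" "y 0"] i y by simp
      show "g *\<^sub>v (snd E (Arr b) *\<^sub>v Y - 0\<^sub>v n) = 0\<^sub>v m" if b: "b < na Q" for b
        using Eac[OF b Yc] gact[of "Arr b" Y] b Yc gY MIu[OF m0] col0 by simp
      show "snd E (Vtx (tgt Q b)) *\<^sub>v 0\<^sub>v n = 0\<^sub>v n" if b: "b < na Q" for b
        using Ec[of "Vtx (tgt Q b)"] wf b by (simp add: quiver_wf_def)
      show "snd E (Arr b') *\<^sub>v 0\<^sub>v n = 0\<^sub>v n" if b: "b' < na Q" for b'
        using Ec[of "Arr b'"] b by simp
    qed auto
    then show ?thesis using that gY by auto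
  next
    case False
    define a1 where "a1 = hd bs"
    have a1: "a1 \<in> set bs" unfolding a1_def using False by simp
    have R1: "R ! 1 = Arr a1" unfolding Rdef a1_def using False by (cases bs) auto
    have m1: "1 < m" unfolding mR using False by (cases bs) auto
    have a1P: "a1 < na Q" "\<not> is_loop Q a1" "tgt Q a1 = i" using bsP[OF a1] by auto
    have v1: "src Q a1 < nv Q" using wf a1P by (simp add: quiver_wf_def)
    define X where "X = snd E (Vtx (src Q a1)) *\<^sub>v y 1"
    have Xc: "X \<in> carrier_vec n" unfolding X_def using Evc v1 y by simp
    have gX: "g *\<^sub>v X = unit_vec m 1"
      unfolding X_def using gact[of "Vtx (src Q a1)" "y 1"] v1 y[of 1] MIu[OF m1] colc[OF _ m1 R1 a1] by simp
    define w0 where "w0 = snd E (Arr a1) *\<^sub>v X"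
    show ?thesis
    proof (rule that)
      show "w0 \<in> carrier_vec n" unfolding w0_def using Eac a1P Xc by simp
      show "g *\<^sub>v w0 = unit_vec m 0"
        unfolding w0_def using gact[of "Arr a1" X] a1P Xc gX MIu[OF m1] colc[OF _ m1 R1 a1] by simp
      show "snd E (Arr b) *\<^sub>v w0 = 0\<^sub>v n" if "b < na Q" for b
        unfolding w0_def using Eact[of "Arr b" "Arr a1" X] that a1P Xc by simp
      show "snd E (Vtx w) *\<^sub>v w0 = (if w = i then w0 else 0\<^sub>v n)" if "w < nv Q" for w
        unfolding w0_def using Eact[of "Vtx w" "Arr a1" X] that a1P Xc by auto
    qed
  qed
  define PW where "PW = (\<lambda>c a W. W \<in> carrier_vec n \<and> g *\<^sub>v W = unit_vec m c
     \<and> (\<forall>b<na Q. snd E (Arr b) *\<^sub>v W = (if b = a then w0 else 0\<^sub>v n))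
     \<and> (\<forall>w<nv Q. snd E (Vtx w) *\<^sub>v W = (if w = src Q a then W else 0\<^sub>v n)))"
  have exW: "\<exists>W. PW c a W" if c: "0 < c" "c < m" "R ! c = Arr a" "a \<in> set bs" for c a
  proof -
    have aP: "a < na Q" "\<not> is_loop Q a" "tgt Q a = i" using bsP[OF c(4)] by auto
    have v: "src Q a < nv Q" using wf aP by (simp add: quiver_wf_def)
    define Y where "Y = snd E (Vtx (src Q a)) *\<^sub>v y c"
    have Yc: "Y \<in> carrier_vec n" unfolding Y_def using Evc v y by simp
    have gY: "g *\<^sub>v Y = unit_vec m c"
      unfolding Y_def using gact[of "Vtx (src Q a)" "y c"] v y[of c] MIu[OF c(2)] colc[OF c] by simp
    define T where "T = (\<lambda>b. if b = a then w0 else 0\<^sub>v n)"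
    have "\<exists>W. W \<in> carrier_vec n \<and> g *\<^sub>v W = g *\<^sub>v Y \<and> (\<forall>b<na Q. snd E (Arr b) *\<^sub>v W = T b)
              \<and> (\<forall>w<nv Q. snd E (Vtx w) *\<^sub>v W = (if w = src Q a then W else 0\<^sub>v n))"
    proof (rule GC[OF Yc v HA[OF c(4)]])
      show "snd E (Vtx (src Q a)) *\<^sub>v Y = Y" unfolding Y_def using Eact[of "Vtx (src Q a)" "Vtx (src Q a)" "y c"] v y by simp
      show "T b \<in> carrier_vec n" for b unfolding T_def using w0c by simp
      show "src Q b \<noteq> src Q a \<Longrightarrow> T b = 0\<^sub>v n" for b unfolding T_def by auto
      show "snd E (Vtx (tgt Q b)) *\<^sub>v T b = T b" if b: "b < na Q" for b
        unfolding T_def using w0V[OF i] aP Ec[of "Vtx (tgt Q b)"] wf b by (auto simp: quiver_wf_def)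
      show "snd E (Arr b') *\<^sub>v T b = 0\<^sub>v n" if "b < na Q" "b' < na Q" for b b'
        unfolding T_def using w0A that Ec[of "Arr b'"] by auto
      show "g *\<^sub>v (snd E (Arr b) *\<^sub>v Y - T b) = 0\<^sub>v m" if b: "b < na Q" for b
      proof -
        have Tc: "T b \<in> carrier_vec n" unfolding T_def using w0c by simp
        have "g *\<^sub>v (snd E (Arr b) *\<^sub>v Y - T b) = g *\<^sub>v (snd E (Arr b) *\<^sub>v Y) - g *\<^sub>v T b"
          using mult_minus_distrib_mat_vec[OF gc Eac[OF b Yc] Tc] .
        also have "g *\<^sub>v (snd E (Arr b) *\<^sub>v Y) = (if b = a then unit_vec m 0 else 0\<^sub>v m)"
          using gact[of "Arr b" Y] b Yc gY MIu[OF c(2)] colc[OF c] by simp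
        also have "g *\<^sub>v T b = (if b = a then unit_vec m 0 else 0\<^sub>v m)"
          unfolding T_def using w0g gc by simp
        finally show ?thesis by simp
      qed
    qed
    then show ?thesis unfolding PW_def T_def using gY by auto
  qed
  define w where "w = (\<lambda>c. if c = 0 then w0 else (SOME W. \<forall>a. R ! c = Arr a \<longrightarrow> PW c a W))"
  have wA: "PW c a (w c)" if c: "0 < c" "c < m" "R ! c = Arr a" "a \<in> set bs" for c a
  proof -
    obtain W where W: "PW c a W" using exW[OF c] by blast
    have "\<exists>W. \<forall>a'. R ! c = Arr a' \<longrightarrow> PW c a' W" using W c(3) by (intro exI[of _ W]) auto
    then have "\<forall>a'. R ! c = Arr a' \<longrightarrow> PW c a' (SOME W. \<forall>a'. R ! c = Arr a' \<longrightarrow> PW c a' W)"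
      by (rule someI_ex)
    then show ?thesis unfolding w_def using c by simp
  qed
  have ww0: "w 0 = w0" unfolding w_def by simp
  show "\<exists>s. is_hom Q M E s \<and> g * s = 1\<^sub>m (fst M)"
  proof (rule split_crit[OF gh])
    show "snd M b \<in> carrier_mat (fst M) (fst M)" if "b \<in> set (basisA Q)" for b
      unfolding Mfst' Msnd'[OF that] using MIc .
    show "snd E b \<in> carrier_mat (fst E) (fst E)" if "b \<in> set (basisA Q)" for b
      using Ec[OF that] n_def by simp
    show "w c \<in> carrier_vec (fst E)" if c: "c < fst M" for c
      using Rcases[of c] c Mfst' w0c wA n_def ww0 unfolding PW_def by (cases "c = 0") auto
    show "g *\<^sub>v w c = unit_vec (fst M) c" if c: "c < fst M" for c
      using Rcases[of c] c Mfst' w0g wA ww0 unfolding PW_def by (cases "c = 0") auto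
    show "(\<exists>r<fst M. col (snd M b) c = unit_vec (fst M) r \<and> snd E b *\<^sub>v w c = w r) \<or>
      (col (snd M b) c = 0\<^sub>v (fst M) \<and> snd E b *\<^sub>v w c = 0\<^sub>v (fst E))"
      if b: "b \<in> set (basisA Q)" and c: "c < fst M" for b c
    proof -
      have c': "c < m" using c Mfst' by simp
      have goal: "(\<exists>r<m. col (MI b) c = unit_vec m r \<and> snd E b *\<^sub>v w c = w r) \<or>
        (col (MI b) c = 0\<^sub>v m \<and> snd E b *\<^sub>v w c = 0\<^sub>v n)"
        using Rcases[OF c']
      proof
        assume c0: "c = 0"
        show ?thesis
        proof (cases b)
          case (Vtx u)
          then have u: "u < nv Q" using b by simp
          show ?thesis
          proof (cases "u = i")
            case True
            then show ?thesis using c0 ww0 col0 Vtx w0V[OF u] m0 by auto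
          next
            case False
            then show ?thesis using c0 ww0 col0 Vtx w0V[OF u] by auto
          qed
        next
          case (Arr a)
          then show ?thesis using c0 ww0 col0 w0A b by auto
        qed
      next
        assume "\<exists>a\<in>set bs. 0 < c \<and> R ! c = Arr a"
        then obtain a where a: "a \<in> set bs" "0 < c" "R ! c = Arr a" by blast
        have P: "PW c a (w c)" using wA[OF a(2) c' a(3) a(1)] .
        have cl: "col (MI b) c = (if b = Arr a then unit_vec m 0 else if b = Vtx (src Q a) then unit_vec m c else 0\<^sub>v m)"
          using colc[OF a(2) c' a(3) a(1)] .
        show ?thesis
        proof (cases b)
          case (Vtx u)
          then have u: "u < nv Q" using b by simp
          show ?thesis using P u cl Vtx c' unfolding PW_def by auto
        next
          case (Arr a')
          then have a': "a' < na Q" using b by simp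
          show ?thesis using P a' cl Arr m0 ww0 unfolding PW_def by auto
        qed
      qed
      then show ?thesis unfolding Msnd'[OF b] Mfst' n_def .
    qed
  qed
qed

lemma mulB_Vtx_iff: "mulB Q x y = Some (Vtx i) \<longleftrightarrow> x = Vtx i \<and> y = Vtx i"
  by (cases x; cases y) (auto split: if_splits)

lemma mulB_Arr_iff: "mulB Q x y = Some (Arr a) \<longleftrightarrow> \<not> is_loop Q a \<and>
      ((x = Vtx (tgt Q a) \<and> y = Arr a) \<or> (x = Arr a \<and> y = Vtx (src Q a)))"
  by (cases x; cases y) (auto split: if_splits)

lemma single_left:
  fixes A :: "'a::semiring_1 mat"
  assumes A: "A \<in> carrier_mat q q" and x: "x < p" and y: "y < q" and c0: "c0 < q"
  shows "(mat p q (\<lambda>(u,v). if u = r0 \<and> v = c0 then 1 else 0) * A) $$ (x,y) = (if x = r0 then A $$ (c0,y) else 0)"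
proof -
  have "(mat p q (\<lambda>(u,v). if u = r0 \<and> v = c0 then 1 else 0) * A) $$ (x,y)
      = (\<Sum>t\<in>{0..<q}. (if x = r0 \<and> t = c0 then 1 else 0) * A $$ (t,y))"
    using A x y by (simp add: scalar_prod_def)
  also have "\<dots> = (\<Sum>t\<in>{0..<q}. if t = c0 then (if x = r0 then A $$ (t,y) else 0) else 0)"
    by (rule sum.cong) auto
  also have "\<dots> = (if x = r0 then A $$ (c0,y) else 0)" using c0 by (subst sum.delta) auto
  finally show ?thesis .
qed

lemma single_right:
  fixes B :: "'a::semiring_1 mat"
  assumes B: "B \<in> carrier_mat p p" and x: "x < p" and y: "y < q" and r0: "r0 < p"
  shows "(B * mat p q (\<lambda>(u,v). if u = r0 \<and> v = c0 then 1 else 0)) $$ (x,y) = (if y = c0 then B $$ (x,r0) else 0)"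
proof -
  have "(B * mat p q (\<lambda>(u,v). if u = r0 \<and> v = c0 then 1 else 0)) $$ (x,y)
      = (\<Sum>t\<in>{0..<p}. B $$ (x,t) * (if t = r0 \<and> y = c0 then 1 else 0))"
    using B x y by (simp add: scalar_prod_def)
  also have "\<dots> = (\<Sum>t\<in>{0..<p}. if t = r0 then (if y = c0 then B $$ (x,t) else 0) else 0)"
    by (rule sum.cong) auto
  also have "\<dots> = (if y = c0 then B $$ (x,r0) else 0)" using r0 by (subst sum.delta) auto
  finally show ?thesis .
qed

lemma single_nonzero:
  assumes "r0 < p" "c0 < q"
  shows "mat p q (\<lambda>(u,v). if u = r0 \<and> v = c0 then 1 else 0) \<noteq> (0\<^sub>m p q :: 'a::zero_neq_one mat)"
proof
  assume h: "mat p q (\<lambda>(u,v). if u = r0 \<and> v = c0 then 1 else 0) = (0\<^sub>m p q :: 'a mat)"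
  have "mat p q (\<lambda>(u,v). if u = r0 \<and> v = c0 then 1 else 0) $$ (r0,c0) = (1::'a)" using assms by simp
  moreover have "(0\<^sub>m p q :: 'a mat) $$ (r0,c0) = 0" using assms by simp
  ultimately show False using h by simp
qed

lemma Ptil_hom_arrow:
  assumes i: "i < nv Q" and j: "j < nv Q" and a: "a < na Q" "\<not> is_loop Q a" "src Q a = j" "tgt Q a = i"
  shows "\<exists>h. is_hom Q (Ptil Q i :: 'k::field amod) (Ptil Q j) h \<and> h \<noteq> 0\<^sub>m (fst (Ptil Q j :: 'k amod)) (fst (Ptil Q i :: 'k amod))"
proof -
  define as where "as = filter (\<lambda>a. \<not> is_loop Q a \<and> src Q a = i) [0..<na Q]"
  define bs where "bs = filter (\<lambda>a. \<not> is_loop Q a \<and> src Q a = j) [0..<na Q]"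
  define L where "L = Vtx i # map Arr as"
  define L' where "L' = Vtx j # map Arr bs"
  have PL: "Pbasis Q i = L" unfolding L_def as_def using Pbasis_eq[OF i] .
  have PL': "Pbasis Q j = L'" unfolding L'_def bs_def using Pbasis_eq[OF j] .
  define m where "m = length L"
  define m' where "m' = length L'"
  have Pi: "(Ptil Q i :: 'k amod) = (m, \<lambda>b. mat m m (\<lambda>(r,c). if mulB Q b (L!c) = Some (L!r) then 1 else 0))"
    unfolding Ptil_def Let_def PL m_def by simp
  have Pj: "(Ptil Q j :: 'k amod) = (m', \<lambda>b. mat m' m' (\<lambda>(r,c). if mulB Q b (L'!c) = Some (L'!r) then 1 else 0))"
    unfolding Ptil_def Let_def PL' m'_def by simp
  have abs: "a \<in> set bs" unfolding bs_def using a by simp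
  obtain k where k: "0 < k" "k < m'" "L' ! k = Arr a"
    using VA_arr_index[OF abs, of j] unfolding L'_def m'_def by auto
  have dbs: "distinct bs" unfolding bs_def by simp
  have L'a: "x < m' \<Longrightarrow> L' ! x = Arr a \<longleftrightarrow> x = k" for x
    using VA_nth_Arr[OF dbs, of k x j a] k unfolding L'_def m'_def by simp
  have Lv: "y < m \<Longrightarrow> L ! y = Vtx i \<longleftrightarrow> y = 0" for y
    using VA_nth_Vtx[of y as i i] unfolding L_def m_def by simp
  have m0: "0 < m" unfolding m_def L_def by simp
  have L0: "L ! 0 = Vtx i" unfolding L_def by simp
  define h where "h = mat m' m (\<lambda>(u,v). if u = k \<and> v = 0 then 1 else (0::'k))"
  have hom: "is_hom Q (Ptil Q i :: 'k amod) (Ptil Q j) h"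
    unfolding is_hom_def Pi Pj
  proof (intro conjI ballI)
    show "h \<in> carrier_mat (fst (m', \<lambda>b. mat m' m' (\<lambda>(r,c). if mulB Q b (L'!c) = Some (L'!r) then 1 else (0::'k))))
       (fst (m, \<lambda>b. mat m m (\<lambda>(r,c). if mulB Q b (L!c) = Some (L!r) then 1 else (0::'k))))"
      unfolding h_def by simp
    fix b assume b: "b \<in> set (basisA Q)"
    show "h * snd (m, \<lambda>b. mat m m (\<lambda>(r,c). if mulB Q b (L!c) = Some (L!r) then 1 else (0::'k))) b =
          snd (m', \<lambda>b. mat m' m' (\<lambda>(r,c). if mulB Q b (L'!c) = Some (L'!r) then 1 else (0::'k))) b * h"
    proof (rule eq_matI)
      fix x y assume "x < dim_row (snd (m', \<lambda>b. mat m' m' (\<lambda>(r,c). if mulB Q b (L'!c) = Some (L'!r) then 1 else (0::'k))) b * h)"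
        "y < dim_col (snd (m', \<lambda>b. mat m' m' (\<lambda>(r,c). if mulB Q b (L'!c) = Some (L'!r) then 1 else (0::'k))) b * h)"
      then have x: "x < m'" and y: "y < m" unfolding h_def by auto
      have l: "(h * mat m m (\<lambda>(r,c). if mulB Q b (L!c) = Some (L!r) then 1 else (0::'k))) $$ (x,y)
          = (if x = k \<and> b = Vtx i \<and> y = 0 then 1 else 0)"
      proof -
        have "(h * mat m m (\<lambda>(r,c). if mulB Q b (L!c) = Some (L!r) then 1 else (0::'k))) $$ (x,y)
          = (if x = k then (if mulB Q b (L!y) = Some (L!0) then 1 else 0) else 0)"
          unfolding h_def by (subst single_left) (use x y m0 in auto)
        moreover have "mulB Q b (L!y) = Some (L!0) \<longleftrightarrow> b = Vtx i \<and> y = 0"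
          using Lv[OF y] unfolding L0 mulB_Vtx_iff by simp
        ultimately show ?thesis by auto
      qed
      have r: "(mat m' m' (\<lambda>(r,c). if mulB Q b (L'!c) = Some (L'!r) then 1 else (0::'k)) * h) $$ (x,y)
          = (if x = k \<and> b = Vtx i \<and> y = 0 then 1 else 0)"
      proof -
        have "(mat m' m' (\<lambda>(r,c). if mulB Q b (L'!c) = Some (L'!r) then 1 else (0::'k)) * h) $$ (x,y)
          = (if y = 0 then (if mulB Q b (L'!k) = Some (L'!x) then 1 else 0) else 0)"
          unfolding h_def by (subst single_right) (use x y k in auto)
        moreover have "mulB Q b (L'!k) = Some (L'!x) \<longleftrightarrow> b = Vtx i \<and> x = k"
          using L'a[OF x] k(3) a by (cases b) (auto split: if_splits)
        ultimately show ?thesis by auto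
      qed
      show "(h * snd (m, \<lambda>b. mat m m (\<lambda>(r,c). if mulB Q b (L!c) = Some (L!r) then 1 else (0::'k))) b) $$ (x,y) =
          (snd (m', \<lambda>b. mat m' m' (\<lambda>(r,c). if mulB Q b (L'!c) = Some (L'!r) then 1 else (0::'k))) b * h) $$ (x,y)"
        using l r by simp
    qed (auto simp: h_def)
  qed
  have "h \<noteq> 0\<^sub>m m' m" unfolding h_def by (rule single_nonzero) (use k m0 in auto)
  then show ?thesis using hom Pi Pj by auto
qed


lemma Itil_hom_arrow:
  assumes i: "i < nv Q" and j: "j < nv Q" and a: "a < na Q" "\<not> is_loop Q a" "src Q a = j" "tgt Q a = i"
  shows "\<exists>h. is_hom Q (Itil Q i :: 'k::field amod) (Itil Q j) h \<and> h \<noteq> 0\<^sub>m (fst (Itil Q j :: 'k amod)) (fst (Itil Q i :: 'k amod))"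
proof -
  define as where "as = filter (\<lambda>a. \<not> is_loop Q a \<and> tgt Q a = i) [0..<na Q]"
  define bs where "bs = filter (\<lambda>a. \<not> is_loop Q a \<and> tgt Q a = j) [0..<na Q]"
  define L where "L = Vtx i # map Arr as"
  define L' where "L' = Vtx j # map Arr bs"
  have PL: "Ibasis Q i = L" unfolding L_def as_def using Ibasis_eq[OF i] .
  have PL': "Ibasis Q j = L'" unfolding L'_def bs_def using Ibasis_eq[OF j] .
  define m where "m = length L"
  define m' where "m' = length L'"
  define MA where "MA = (\<lambda>b. mat m m (\<lambda>(r,c). if mulB Q (L!r) b = Some (L!c) then 1 else (0::'k)))"
  define MB where "MB = (\<lambda>b. mat m' m' (\<lambda>(r,c). if mulB Q (L'!r) b = Some (L'!c) then 1 else (0::'k)))"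
  have Pi: "(Itil Q i :: 'k amod) = (m, MA)"
    unfolding Itil_def Let_def PL m_def MA_def by simp
  have Pj: "(Itil Q j :: 'k amod) = (m', MB)"
    unfolding Itil_def Let_def PL' m'_def MB_def by simp
  have aas: "a \<in> set as" unfolding as_def using a by simp
  obtain k where k: "0 < k" "k < m" "L ! k = Arr a"
    using VA_arr_index[OF aas, of i] unfolding L_def m_def by auto
  have das: "distinct as" unfolding as_def by simp
  have La: "y < m \<Longrightarrow> L ! y = Arr a \<longleftrightarrow> y = k" for y
    using VA_nth_Arr[OF das, of k y i a] k unfolding L_def m_def by simp
  have L'v: "x < m' \<Longrightarrow> L' ! x = Vtx j \<longleftrightarrow> x = 0" for x
    using VA_nth_Vtx[of x bs j j] unfolding L'_def m'_def by simp
  have m'0: "0 < m'" unfolding m'_def L'_def by simp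
  have L'0: "L' ! 0 = Vtx j" unfolding L'_def by simp
  have mA: "mulB Q (Arr a) b = Some z \<longleftrightarrow> b = Vtx j \<and> z = Arr a" for b z
    using a by (cases b) (auto split: if_splits)
  define h where "h = mat m' m (\<lambda>(u,v). if u = 0 \<and> v = k then 1 else (0::'k))"
  have hom: "is_hom Q (Itil Q i :: 'k amod) (Itil Q j) h"
    unfolding is_hom_def Pi Pj fst_conv snd_conv
  proof (intro conjI ballI)
    show "h \<in> carrier_mat m' m" unfolding h_def by simp
    fix b assume b: "b \<in> set (basisA Q)"
    show "h * MA b = MB b * h"
    proof (rule eq_matI)
      fix x y assume "x < dim_row (MB b * h)" "y < dim_col (MB b * h)"
      then have x: "x < m'" and y: "y < m" unfolding h_def MB_def by auto
      have l: "(h * MA b) $$ (x,y) = (if x = 0 \<and> b = Vtx j \<and> y = k then 1 else 0)"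
      proof -
        have "(h * MA b) $$ (x,y) = (if x = 0 then (if mulB Q (L!k) b = Some (L!y) then 1 else 0) else 0)"
          unfolding h_def MA_def by (subst single_left) (use x y k in auto)
        moreover have "mulB Q (L!k) b = Some (L!y) \<longleftrightarrow> b = Vtx j \<and> y = k"
          unfolding k(3) mA using La[OF y] by auto
        ultimately show ?thesis by auto
      qed
      have r: "(MB b * h) $$ (x,y) = (if x = 0 \<and> b = Vtx j \<and> y = k then 1 else 0)"
      proof -
        have "(MB b * h) $$ (x,y) = (if y = k then (if mulB Q (L'!x) b = Some (L'!0) then 1 else 0) else 0)"
          unfolding h_def MB_def by (subst single_right) (use x y m'0 in auto)
        moreover have "mulB Q (L'!x) b = Some (L'!0) \<longleftrightarrow> b = Vtx j \<and> x = 0"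
          unfolding L'0 mulB_Vtx_iff using L'v[OF x] by auto
        ultimately show ?thesis by auto
      qed
      show "(h * MA b) $$ (x,y) = (MB b * h) $$ (x,y)" using l r by simp
    qed (auto simp: h_def MA_def MB_def)
  qed
  have "h \<noteq> 0\<^sub>m m' m" unfolding h_def by (rule single_nonzero) (use k m'0 in auto)
  then show ?thesis using hom Pi Pj by auto
qed


lemma Ptil_HP:
  assumes wf: "quiver_wf Q" and i: "i < nv Q" and j: "j < nv Q"
    and H: "\<And>a. a < na Q \<Longrightarrow> \<not> is_loop Q a \<Longrightarrow> src Q a = j \<Longrightarrow> tgt Q a = i \<Longrightarrow> False"
    and H0: "i \<noteq> j \<or> (\<exists>a<na Q. \<not> is_loop Q a \<and> src Q a = i)"
    and u: "u \<in> carrier_vec (fst (Ptil Q j :: 'k::field amod))"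
    and ui: "snd (Ptil Q j :: 'k amod) (Vtx i) *\<^sub>v u = u"
    and ua: "\<forall>b<na Q. snd (Ptil Q j :: 'k amod) (Arr b) *\<^sub>v u = 0\<^sub>v (fst (Ptil Q j :: 'k amod))"
  shows "u = 0\<^sub>v (fst (Ptil Q j :: 'k amod))"
proof -
  define as where "as = filter (\<lambda>a. \<not> is_loop Q a \<and> src Q a = j) [0..<na Q]"
  define L where "L = Vtx j # map Arr as"
  define m where "m = length L"
  have PL: "Pbasis Q j = L" unfolding L_def as_def using Pbasis_eq[OF j] .
  define NN where "NN = (\<lambda>b. mat m m (\<lambda>(r,c). if mulB Q b (L!c) = Some (L!r) then 1 else (0::'k)))"
  have Peq: "(Ptil Q j :: 'k amod) = (m, NN)" unfolding Ptil_def Let_def PL m_def NN_def by simp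
  have uc: "u \<in> carrier_vec m" using u Peq by simp
  have das: "distinct as" unfolding as_def by simp
  have setas: "a \<in> set as \<longleftrightarrow> a < na Q \<and> \<not> is_loop Q a \<and> src Q a = j" for a unfolding as_def by auto
  have mL: "m = Suc (length as)" unfolding m_def L_def by simp
  have Lv: "r < m \<Longrightarrow> L ! r = Vtx w \<longleftrightarrow> r = 0 \<and> w = j" for r w
    unfolding L_def mL by (rule VA_nth_Vtx)
  have La: "k < m \<Longrightarrow> r < m \<Longrightarrow> L ! k = Arr a \<Longrightarrow> L ! r = Arr a \<longleftrightarrow> r = k" for k r a
    unfolding L_def mL using VA_nth_Arr[OF das] by blast
  have Lcases: "r < m \<Longrightarrow> r = 0 \<or> (\<exists>a\<in>set as. 0 < r \<and> L ! r = Arr a)" for r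
    unfolding L_def mL by (rule VA_nth_cases)
  have Lidx: "a \<in> set as \<Longrightarrow> \<exists>k. 0 < k \<and> k < m \<and> L ! k = Arr a" for a
    unfolding L_def mL by (rule VA_arr_index)
  have L0: "L ! 0 = Vtx j" unfolding L_def by simp
  have m0: "0 < m" unfolding mL by simp
  have coord: "(NN b *\<^sub>v u) $ r = (\<Sum>c<m. if mulB Q b (L!c) = Some (L!r) then u $ c else 0)" if "r < m" for b r
    unfolding NN_def using mat01_mult_vec[OF uc that] .
  have ui': "NN (Vtx i) *\<^sub>v u = u" using ui Peq by simp
  have ua': "NN (Arr b) *\<^sub>v u = 0\<^sub>v m" if "b < na Q" for b using ua that Peq by simp
  have "u = 0\<^sub>v m"
  proof (rule eq_vecI)
    fix r assume "r < dim_vec (0\<^sub>v m :: 'k vec)"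
    then have r: "r < m" by simp
    show "u $ r = 0\<^sub>v m $ r"
      using Lcases[OF r]
    proof
      assume r0: "r = 0"
      show ?thesis
      proof (cases "i = j")
        case False
        have "(NN (Vtx i) *\<^sub>v u) $ 0 = 0"
          unfolding coord[OF m0] by (rule sum_if_none) (use False L0 mulB_Vtx_iff in auto)
        then show ?thesis using ui' r0 r by simp
      next
        case True
        then obtain a where a: "a < na Q" "\<not> is_loop Q a" "src Q a = i" using H0 by blast
        then have aas: "a \<in> set as" using setas True by simp
        obtain k where k: "0 < k" "k < m" "L ! k = Arr a" using Lidx[OF aas] by blast
        have "(NN (Arr a) *\<^sub>v u) $ k = u $ 0"
          unfolding coord[OF k(2)] k(3)
          by (rule sum_if_single[OF m0]) (use a True L0 Lcases mulB_Arr_iff Lv in \<open>auto\<close>)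
        then show ?thesis using ua'[OF a(1)] k r0 by simp
      qed
    next
      assume "\<exists>a\<in>set as. 0 < r \<and> L ! r = Arr a"
      then obtain a where a: "a \<in> set as" "0 < r" "L ! r = Arr a" by blast
      have aP: "a < na Q" "\<not> is_loop Q a" "src Q a = j" using a setas by auto
      have ti: "tgt Q a \<noteq> i" using H[OF aP] by blast
      have "(NN (Vtx i) *\<^sub>v u) $ r = 0"
        unfolding coord[OF r] a(3) by (rule sum_if_none) (use ti mulB_Arr_iff in auto)
      then show ?thesis using ui' r by simp
    qed
  qed (use uc in simp)
  then show ?thesis using Peq by simp
qed

lemma simple_carrier: "snd (simple_mod Q j :: 'k::field amod) b \<in> carrier_mat (fst (simple_mod Q j :: 'k amod)) (fst (simple_mod Q j :: 'k amod))"
  by (cases b) (auto simp: simple_mod_def)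

lemma simple_HP:
  assumes "i \<noteq> j" "u \<in> carrier_vec (fst (simple_mod Q j :: 'k::field amod))"
    "snd (simple_mod Q j :: 'k amod) (Vtx i) *\<^sub>v u = u"
  shows "u = 0\<^sub>v (fst (simple_mod Q j :: 'k amod))"
  using assms by (auto simp: simple_mod_def)

lemma Ptil_carrier: "snd (Ptil Q i :: 'k::field amod) b \<in> carrier_mat (fst (Ptil Q i :: 'k amod)) (fst (Ptil Q i :: 'k amod))"
  by (simp add: Ptil_def Let_def)

lemma Itil_carrier: "snd (Itil Q i :: 'k::field amod) b \<in> carrier_mat (fst (Itil Q i :: 'k amod)) (fst (Itil Q i :: 'k amod))"
  by (simp add: Itil_def Let_def)

lemma iso_of_eq:
  assumes "fst M = 1" "fst N = 1"
    and "\<And>b. b \<in> set (basisA Q) \<Longrightarrow> snd M b = snd N b"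
    and "\<And>b. b \<in> set (basisA Q) \<Longrightarrow> snd M b \<in> carrier_mat 1 1"
  shows "mod_iso Q M (N :: 'k::field amod)"
  unfolding mod_iso_def is_hom_def
proof (rule exI[of _ "1\<^sub>m 1"], rule exI[of _ "1\<^sub>m 1"], intro conjI ballI)
  fix b assume b: "b \<in> set (basisA Q)"
  have c: "snd M b \<in> carrier_mat 1 1" "snd N b \<in> carrier_mat 1 1" using assms(3,4)[OF b] by auto
  show "1\<^sub>m 1 * snd M b = snd N b * 1\<^sub>m 1" using c assms(3)[OF b] by simp
  show "1\<^sub>m 1 * snd N b = snd M b * 1\<^sub>m 1" using c assms(3)[OF b] by simp
qed (use assms(1,2) in simp_all)

lemma Ptil_iso_simple:
  assumes i: "i < nv Q" and no: "\<And>a. a < na Q \<Longrightarrow> \<not> is_loop Q a \<Longrightarrow> src Q a \<noteq> i"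
  shows "mod_iso Q (Ptil Q i :: 'k::field amod) (simple_mod Q i)"
proof -
  have e: "filter (\<lambda>a. \<not> is_loop Q a \<and> src Q a = i) [0..<na Q] = []"
  proof (rule filter_False, intro ballI)
    fix x assume "x \<in> set [0..<na Q]"
    then have "x < na Q" by simp
    then show "\<not> (\<not> is_loop Q x \<and> src Q x = i)" using no[of x] by blast
  qed
  have PL: "Pbasis Q i = [Vtx i]" using Pbasis_eq[OF i] e by simp
  show ?thesis
  proof (rule iso_of_eq)
    show "fst (Ptil Q i :: 'k amod) = 1" by (simp add: Ptil_def Let_def PL)
    show "fst (simple_mod Q i :: 'k amod) = 1" by (simp add: simple_mod_def)
    show "snd (Ptil Q i :: 'k amod) b \<in> carrier_mat 1 1" for b by (simp add: Ptil_def Let_def PL)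
    show "snd (Ptil Q i :: 'k amod) b = snd (simple_mod Q i) b" for b
      by (cases b) (auto simp: Ptil_def Let_def PL simple_mod_def intro!: eq_matI)
  qed
qed

lemma Itil_iso_simple:
  assumes i: "i < nv Q" and no: "\<And>a. a < na Q \<Longrightarrow> \<not> is_loop Q a \<Longrightarrow> tgt Q a \<noteq> i"
  shows "mod_iso Q (Itil Q i :: 'k::field amod) (simple_mod Q i)"
proof -
  have e: "filter (\<lambda>a. \<not> is_loop Q a \<and> tgt Q a = i) [0..<na Q] = []"
  proof (rule filter_False, intro ballI)
    fix x assume "x \<in> set [0..<na Q]"
    then have "x < na Q" by simp
    then show "\<not> (\<not> is_loop Q x \<and> tgt Q x = i)" using no[of x] by blast
  qed
  have PL: "Ibasis Q i = [Vtx i]" using Ibasis_eq[OF i] e by simp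
  show ?thesis
  proof (rule iso_of_eq)
    show "fst (Itil Q i :: 'k amod) = 1" by (simp add: Itil_def Let_def PL)
    show "fst (simple_mod Q i :: 'k amod) = 1" by (simp add: simple_mod_def)
    show "snd (Itil Q i :: 'k amod) b \<in> carrier_mat 1 1" for b by (simp add: Itil_def Let_def PL)
    show "snd (Itil Q i :: 'k amod) b = snd (simple_mod Q i) b" for b
      by (cases b) (auto simp: Itil_def Let_def PL simple_mod_def intro!: eq_matI)
  qed
qed


theorem lemma2p2:
  fixes Q :: quiver and i j :: nat
    and K :: "'k::alg_closed_field itself"
  assumes "quiver_wf Q" and "i < nv Q" and "j < nv Q"
  shows
    "(i \<noteq> j \<longrightarrow> brick_pair Q (Ptil Q i :: 'k amod) (Ptil Q j) \<longrightarrow>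
        Ext1_zero Q (Ptil Q i :: 'k amod) (Ptil Q j)) \<and>
     (\<not> mod_iso Q (Ptil Q i :: 'k amod) (simple_mod Q i) \<longrightarrow>
        Ext1_zero Q (Ptil Q i :: 'k amod) (Ptil Q i)) \<and>
     (i \<noteq> j \<longrightarrow> brick_pair Q (Itil Q i :: 'k amod) (Itil Q j) \<longrightarrow>
        Ext1_zero Q (Itil Q i :: 'k amod) (Itil Q j)) \<and>
     (\<not> mod_iso Q (Itil Q i :: 'k amod) (simple_mod Q i) \<longrightarrow>
        Ext1_zero Q (Itil Q i :: 'k amod) (Itil Q i)) \<and>
     (i \<noteq> j \<longrightarrow> Ext1_zero Q (Ptil Q i :: 'k amod) (simple_mod Q j)) \<and>
     (i \<noteq> j \<longrightarrow> Ext1_zero Q (simple_mod Q i :: 'k amod) (Itil Q j))"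
proof -
  note wf = assms(1) and i = assms(2) and j = assms(3)
  define bsi where "bsi = filter (\<lambda>a. \<not> is_loop Q a \<and> tgt Q a = i) [0..<na Q]"
  have IRi: "Ibasis Q i = Vtx i # map Arr bsi" unfolding bsi_def using Ibasis_eq[OF i] .
  have dbsi: "distinct bsi" unfolding bsi_def by simp
  have bsiP: "a \<in> set bsi \<Longrightarrow> a < na Q \<and> \<not> is_loop Q a \<and> tgt Q a = i" for a unfolding bsi_def by auto
  have Ifst: "fst (Itil Q i :: 'k amod) = length (Ibasis Q i)" by (simp add: Itil_def Let_def)
  have Isnd: "snd (Itil Q i :: 'k amod) b = mat (length (Ibasis Q i)) (length (Ibasis Q i))
      (\<lambda>(r,c). if mulB Q (Ibasis Q i ! r) b = Some (Ibasis Q i ! c) then 1 else 0)" for b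
    by (simp add: Itil_def Let_def)
  have part1: "i \<noteq> j \<longrightarrow> brick_pair Q (Ptil Q i :: 'k amod) (Ptil Q j) \<longrightarrow>
        Ext1_zero Q (Ptil Q i :: 'k amod) (Ptil Q j)"
  proof (intro impI)
    assume ij: "i \<noteq> j" and br: "brick_pair Q (Ptil Q i :: 'k amod) (Ptil Q j)"
    have H: False if a: "a < na Q" "\<not> is_loop Q a" "src Q a = j" "tgt Q a = i" for a
    proof -
      obtain h where h: "is_hom Q (Ptil Q i :: 'k amod) (Ptil Q j) h"
        "h \<noteq> 0\<^sub>m (fst (Ptil Q j :: 'k amod)) (fst (Ptil Q i :: 'k amod))"
        using Ptil_hom_arrow[OF i j a] by blast
      then show False using br unfolding brick_pair_def by blast
    qed
    show "Ext1_zero Q (Ptil Q i :: 'k amod) (Ptil Q j)"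
    proof (rule P_lemma[OF wf i])
      show "snd (Ptil Q j :: 'k amod) b \<in> carrier_mat (fst (Ptil Q j :: 'k amod)) (fst (Ptil Q j :: 'k amod))" for b
        by (rule Ptil_carrier)
      show "u = 0\<^sub>v (fst (Ptil Q j :: 'k amod))"
        if "u \<in> carrier_vec (fst (Ptil Q j :: 'k amod))" "snd (Ptil Q j :: 'k amod) (Vtx i) *\<^sub>v u = u"
          "\<forall>b<na Q. snd (Ptil Q j :: 'k amod) (Arr b) *\<^sub>v u = 0\<^sub>v (fst (Ptil Q j :: 'k amod))" for u
        by (rule Ptil_HP[OF wf i j H _ that]) (use ij in auto)
    qed
  qed
  have part1b: "\<not> mod_iso Q (Ptil Q i :: 'k amod) (simple_mod Q i) \<longrightarrow>
        Ext1_zero Q (Ptil Q i :: 'k amod) (Ptil Q i)"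
  proof (intro impI)
    assume ni: "\<not> mod_iso Q (Ptil Q i :: 'k amod) (simple_mod Q i)"
    have ex: "\<exists>a<na Q. \<not> is_loop Q a \<and> src Q a = i"
      using Ptil_iso_simple[OF i] ni by blast
    show "Ext1_zero Q (Ptil Q i :: 'k amod) (Ptil Q i)"
    proof (rule P_lemma[OF wf i])
      show "snd (Ptil Q i :: 'k amod) b \<in> carrier_mat (fst (Ptil Q i :: 'k amod)) (fst (Ptil Q i :: 'k amod))" for b
        by (rule Ptil_carrier)
      show "u = 0\<^sub>v (fst (Ptil Q i :: 'k amod))"
        if "u \<in> carrier_vec (fst (Ptil Q i :: 'k amod))" "snd (Ptil Q i :: 'k amod) (Vtx i) *\<^sub>v u = u"
          "\<forall>b<na Q. snd (Ptil Q i :: 'k amod) (Arr b) *\<^sub>v u = 0\<^sub>v (fst (Ptil Q i :: 'k amod))" for u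
        by (rule Ptil_HP[OF wf i i _ _ that]) (use ex in \<open>auto simp: is_loop_def\<close>)
    qed
  qed
  have part2: "i \<noteq> j \<longrightarrow> brick_pair Q (Itil Q i :: 'k amod) (Itil Q j) \<longrightarrow>
        Ext1_zero Q (Itil Q i :: 'k amod) (Itil Q j)"
  proof (intro impI)
    assume ij: "i \<noteq> j" and br: "brick_pair Q (Itil Q i :: 'k amod) (Itil Q j)"
    show "Ext1_zero Q (Itil Q i :: 'k amod) (Itil Q j)"
    proof (rule I_lemma[OF wf i j IRi dbsi bsiP Ifst Isnd])
      show "src Q a \<noteq> j" if a: "a \<in> set bsi" for a
      proof
        assume s: "src Q a = j"
        have aP: "a < na Q" "\<not> is_loop Q a" "tgt Q a = i" using bsiP[OF a] by auto
        obtain h where h: "is_hom Q (Itil Q i :: 'k amod) (Itil Q j) h"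
          "h \<noteq> 0\<^sub>m (fst (Itil Q j :: 'k amod)) (fst (Itil Q i :: 'k amod))"
          using Itil_hom_arrow[OF i j aP(1,2) s aP(3)] by blast
        then show False using br unfolding brick_pair_def by blast
      qed
      show "i \<noteq> j \<or> bsi \<noteq> []" using ij by simp
    qed
  qed
  have part2b: "\<not> mod_iso Q (Itil Q i :: 'k amod) (simple_mod Q i) \<longrightarrow>
        Ext1_zero Q (Itil Q i :: 'k amod) (Itil Q i)"
  proof (intro impI)
    assume ni: "\<not> mod_iso Q (Itil Q i :: 'k amod) (simple_mod Q i)"
    obtain a where a: "a < na Q" "\<not> is_loop Q a" "tgt Q a = i"
      using Itil_iso_simple[OF i] ni by blast
    have "a \<in> set bsi" unfolding bsi_def using a by simp
    then have ne: "bsi \<noteq> []" by auto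
    show "Ext1_zero Q (Itil Q i :: 'k amod) (Itil Q i)"
    proof (rule I_lemma[OF wf i i IRi dbsi bsiP Ifst Isnd])
      show "src Q a \<noteq> i" if a: "a \<in> set bsi" for a
        using bsiP[OF a] by (auto simp: is_loop_def)
      show "i \<noteq> i \<or> bsi \<noteq> []" using ne by simp
    qed
  qed
  have part3: "i \<noteq> j \<longrightarrow> Ext1_zero Q (Ptil Q i :: 'k amod) (simple_mod Q j)"
  proof (intro impI)
    assume ij: "i \<noteq> j"
    show "Ext1_zero Q (Ptil Q i :: 'k amod) (simple_mod Q j)"
    proof (rule P_lemma[OF wf i])
      show "snd (simple_mod Q j :: 'k amod) b \<in> carrier_mat (fst (simple_mod Q j :: 'k amod)) (fst (simple_mod Q j :: 'k amod))" for b
        by (rule simple_carrier)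
      show "u = 0\<^sub>v (fst (simple_mod Q j :: 'k amod))"
        if "u \<in> carrier_vec (fst (simple_mod Q j :: 'k amod))" "snd (simple_mod Q j :: 'k amod) (Vtx i) *\<^sub>v u = u" for u
        by (rule simple_HP[OF ij that])
    qed
  qed
  have part4: "i \<noteq> j \<longrightarrow> Ext1_zero Q (simple_mod Q i :: 'k amod) (Itil Q j)"
  proof (intro impI)
    assume ij: "i \<noteq> j"
    show "Ext1_zero Q (simple_mod Q i :: 'k amod) (Itil Q j)"
    proof (rule I_lemma[OF wf i j, of "[Vtx i]" "[]"])
      show "fst (simple_mod Q i :: 'k amod) = length [Vtx i]" by (simp add: simple_mod_def)
      show "snd (simple_mod Q i :: 'k amod) b = mat (length [Vtx i]) (length [Vtx i])
          (\<lambda>(r,c). if mulB Q ([Vtx i] ! r) b = Some ([Vtx i] ! c) then 1 else 0)" for b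
        by (cases b) (auto simp: simple_mod_def intro!: eq_matI)
      show "i \<noteq> j \<or> [] \<noteq> []" using ij by simp
    qed auto
  qed
  show ?thesis using part1 part1b part2 part2b part3 part4 by blast
qed

end
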